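(* Let $R$ be a local ring, let $p(X)=\sum_{i=0}^na_iX^i\in R[X]$ be such that $p(X)/1$ is a strong divisor of the local ring $R(X)$ that is not a unit, and let $I=(a_0,\ldots,a_n)$ be the content ideal of $p(X)$. Then $I(X):=IR(X)=R(X)p(X)/1$, and $I=R\rho$ for some strong divisor $\rho$ of $R$ such that $p(X)/1\simeq\rho$ in $R(X)$. If $p(X)/1\in R(X)a_i$ for some $i$, then $I=Ra_i$. Moreover, the image of $\mathrm{Spec}(R(X)_{p(X)/1})\to\mathrm{Spec}(R)$ is $\mathrm D(I)$.
   Context: All rings are commutative with identity; "local" means having a unique maximal ideal. For a ring $A$, $A(X):=A[X]_{\Sigma_A}$ with $\Sigma_A=\{q\in A[X]: c(q)=A\}$, $c(q)$ the ideal generated by the coefficients; if $A$ is local, so is $A(X)$. A strong divisor of a local ring $A$ is a regular element $t$ such that $At$ is comparable under inclusion with every ideal of $A$. Two elements $x,y$ of a ring $B$ are equivalent, written $x\simeq y$, if $\mathrm D(x)=\mathrm D(y)$ in $\mathrm{Spec}(B)$ (equivalently $\sqrt{Bx}=\sqrt{By}$). $\mathrm D(I)=\{P\in\mathrm{Spec}(R): I\not\subseteq P\}$. *)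

theory Defs
  imports "HOL-Algebra.Algebra"
begin

definition local_ring :: "('a, 'm) ring_scheme \<Rightarrow> bool" where
  "local_ring A \<longleftrightarrow> cring A \<and> (\<exists>!M. maximalideal M A)"

definition regular_elem :: "('a, 'm) ring_scheme \<Rightarrow> 'a \<Rightarrow> bool" where
  "regular_elem A t \<longleftrightarrow> t \<in> carrier A \<and>
     (\<forall>x \<in> carrier A. t \<otimes>\<^bsub>A\<^esub> x = \<zero>\<^bsub>A\<^esub> \<longrightarrow> x = \<zero>\<^bsub>A\<^esub>)"

definition strong_divisor :: "('a, 'm) ring_scheme \<Rightarrow> 'a \<Rightarrow> bool" where
  "strong_divisor A t \<longleftrightarrow> regular_elem A t \<and>
     (\<forall>J. ideal J A \<longrightarrow> PIdl\<^bsub>A\<^esub> t \<subseteq> J \<or> J \<subseteq> PIdl\<^bsub>A\<^esub> t)"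

definition Spec :: "('a, 'm) ring_scheme \<Rightarrow> 'a set set" where
  "Spec A = {P. primeideal P A}"

definition D_set :: "('a, 'm) ring_scheme \<Rightarrow> 'a set \<Rightarrow> 'a set set" where
  "D_set A I = {P \<in> Spec A. \<not> I \<subseteq> P}"

definition D_elem :: "('a, 'm) ring_scheme \<Rightarrow> 'a \<Rightarrow> 'a set set" where
  "D_elem A x = D_set A {x}"

definition equiv_elem :: "('a, 'm) ring_scheme \<Rightarrow> 'a \<Rightarrow> 'a \<Rightarrow> bool" where
  "equiv_elem A x y \<longleftrightarrow> D_elem A x = D_elem A y"

definition loc_rel :: "('a, 'm) ring_scheme \<Rightarrow> 'a set \<Rightarrow> (('a \<times> 'a) \<times> ('a \<times> 'a)) set" where
  "loc_rel B S = {((a, s), (b, t)). a \<in> carrier B \<and> s \<in> S \<and> b \<in> carrier B \<and> t \<in> S \<and>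
      (\<exists>u \<in> S. u \<otimes>\<^bsub>B\<^esub> ((a \<otimes>\<^bsub>B\<^esub> t) \<ominus>\<^bsub>B\<^esub> (b \<otimes>\<^bsub>B\<^esub> s)) = \<zero>\<^bsub>B\<^esub>)}"

definition loc_frac :: "('a, 'm) ring_scheme \<Rightarrow> 'a set \<Rightarrow> 'a \<Rightarrow> 'a \<Rightarrow> ('a \<times> 'a) set" where
  "loc_frac B S a s = loc_rel B S `` {(a, s)}"

definition loc_mult :: "('a, 'm) ring_scheme \<Rightarrow> 'a set \<Rightarrow> ('a \<times> 'a) set \<Rightarrow> ('a \<times> 'a) set \<Rightarrow> ('a \<times> 'a) set" where
  "loc_mult B S U V = \<Union>{loc_frac B S (a \<otimes>\<^bsub>B\<^esub> b) (s \<otimes>\<^bsub>B\<^esub> t) | a s b t. (a, s) \<in> U \<and> (b, t) \<in> V}"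

definition loc_add :: "('a, 'm) ring_scheme \<Rightarrow> 'a set \<Rightarrow> ('a \<times> 'a) set \<Rightarrow> ('a \<times> 'a) set \<Rightarrow> ('a \<times> 'a) set" where
  "loc_add B S U V = \<Union>{loc_frac B S ((a \<otimes>\<^bsub>B\<^esub> t) \<oplus>\<^bsub>B\<^esub> (b \<otimes>\<^bsub>B\<^esub> s)) (s \<otimes>\<^bsub>B\<^esub> t)
                        | a s b t. (a, s) \<in> U \<and> (b, t) \<in> V}"

definition localization :: "('a, 'm) ring_scheme \<Rightarrow> 'a set \<Rightarrow> ('a \<times> 'a) set ring" where
  "localization B S =
     \<lparr> carrier = {loc_frac B S a s | a s. a \<in> carrier B \<and> s \<in> S},
       monoid.mult = loc_mult B S,
       one = loc_frac B S (\<one>\<^bsub>B\<^esub>) (\<one>\<^bsub>B\<^esub>),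
       ring.zero = loc_frac B S (\<zero>\<^bsub>B\<^esub>) (\<one>\<^bsub>B\<^esub>),
       ring.add = loc_add B S \<rparr>"

definition loc_map :: "('a, 'm) ring_scheme \<Rightarrow> 'a set \<Rightarrow> 'a \<Rightarrow> ('a \<times> 'a) set" where
  "loc_map B S b = loc_frac B S b (\<one>\<^bsub>B\<^esub>)"

definition content_ideal :: "('a, 'm) ring_scheme \<Rightarrow> (nat \<Rightarrow> 'a) \<Rightarrow> 'a set" where
  "content_ideal R q = Idl\<^bsub>R\<^esub> {q i | i. i \<le> deg R q}"

definition Sigma_set :: "('a, 'm) ring_scheme \<Rightarrow> (nat \<Rightarrow> 'a) set" where
  "Sigma_set R = {q \<in> carrier (UP R). content_ideal R q = carrier R}"

definition nagata :: "('a, 'm) ring_scheme \<Rightarrow> ((nat \<Rightarrow> 'a) \<times> (nat \<Rightarrow> 'a)) set ring" where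
  "nagata R = localization (UP R) (Sigma_set R)"

definition nagata_map :: "('a, 'm) ring_scheme \<Rightarrow> (nat \<Rightarrow> 'a) \<Rightarrow> ((nat \<Rightarrow> 'a) \<times> (nat \<Rightarrow> 'a)) set" where
  "nagata_map R q = loc_map (UP R) (Sigma_set R) q"

definition nagata_const :: "('a, 'm) ring_scheme \<Rightarrow> 'a \<Rightarrow> ((nat \<Rightarrow> 'a) \<times> (nat \<Rightarrow> 'a)) set" where
  "nagata_const R a = nagata_map R (monom (UP R) a 0)"

definition loc_elem :: "('a, 'm) ring_scheme \<Rightarrow> 'a \<Rightarrow> ('a \<times> 'a) set ring" where
  "loc_elem B x = localization B {x [^]\<^bsub>B\<^esub> (n::nat) | n. True}"

definition loc_elem_map :: "('a, 'm) ring_scheme \<Rightarrow> 'a \<Rightarrow> 'a \<Rightarrow> ('a \<times> 'a) set" where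
  "loc_elem_map B x = loc_map B {x [^]\<^bsub>B\<^esub> (n::nat) | n. True}"

end

theory Submission
  imports Defs
begin


locale locS = cring B for B (structure) +
  fixes S
  assumes S_sub: "S \<subseteq> carrier B"
    and one_S: "\<one> \<in> S"
    and mult_S: "\<lbrakk>s \<in> S; t \<in> S\<rbrakk> \<Longrightarrow> s \<otimes> t \<in> S"
begin

abbreviation "L \<equiv> localization B S"
abbreviation "fr \<equiv> loc_frac B S"

lemma SB: "s \<in> S \<Longrightarrow> s \<in> carrier B" using S_sub by auto

lemma rel_iff: "((a, s), (b, t)) \<in> loc_rel B S \<longleftrightarrow>
   a \<in> carrier B \<and> s \<in> S \<and> b \<in> carrier B \<and> t \<in> S \<and> (\<exists>u \<in> S. u \<otimes> ((a \<otimes> t) \<ominus> (b \<otimes> s)) = \<zero>)"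
  unfolding loc_rel_def by auto

lemma neg_eq0: "\<lbrakk>u \<in> carrier B; x \<in> carrier B; y \<in> carrier B; u \<otimes> (x \<ominus> y) = \<zero>\<rbrakk> \<Longrightarrow> u \<otimes> (y \<ominus> x) = \<zero>"
proof -
  assume h: "u \<in> carrier B" "x \<in> carrier B" "y \<in> carrier B" "u \<otimes> (x \<ominus> y) = \<zero>"
  have "u \<otimes> (y \<ominus> x) = \<ominus> (u \<otimes> (x \<ominus> y))" using h(1-3) by algebra
  then show ?thesis using h(4) by simp
qed

lemma equiv_rel: "equiv (carrier B \<times> S) (loc_rel B S)"
proof (rule equivI)
  show "loc_rel B S \<subseteq> (carrier B \<times> S) \<times> (carrier B \<times> S)" unfolding loc_rel_def by auto
  show "refl_on (carrier B \<times> S) (loc_rel B S)"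
  proof (rule refl_onI)
    fix x assume "x \<in> carrier B \<times> S"
    then obtain a s where x: "x = (a, s)" "a \<in> carrier B" "s \<in> S" by auto
    have "\<one> \<otimes> ((a \<otimes> s) \<ominus> (a \<otimes> s)) = \<zero>" using x SB by algebra
    then show "(x, x) \<in> loc_rel B S" using x one_S by (auto simp: rel_iff)
  qed
  show "sym (loc_rel B S)"
  proof (rule symI)
    fix x y assume "(x, y) \<in> loc_rel B S"
    then obtain a s b t u where xy: "x = (a, s)" "y = (b, t)" "a \<in> carrier B" "s \<in> S" "b \<in> carrier B" "t \<in> S"
      "u \<in> S" "u \<otimes> ((a \<otimes> t) \<ominus> (b \<otimes> s)) = \<zero>"
      by (cases x, cases y) (auto simp: rel_iff)
    then have "u \<otimes> ((b \<otimes> s) \<ominus> (a \<otimes> t)) = \<zero>" using neg_eq0 SB by auto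
    then show "(y, x) \<in> loc_rel B S" using xy by (auto simp: rel_iff)
  qed
  show "trans (loc_rel B S)"
  proof (rule transI)
    fix x y z assume "(x, y) \<in> loc_rel B S" "(y, z) \<in> loc_rel B S"
    then obtain a s b t c w u v where xy: "x = (a, s)" "y = (b, t)" "z = (c, w)" "a \<in> carrier B" "s \<in> S" "b \<in> carrier B" "t \<in> S"
      "c \<in> carrier B" "w \<in> S"
      "u \<in> S" "u \<otimes> ((a \<otimes> t) \<ominus> (b \<otimes> s)) = \<zero>" "v \<in> S" "v \<otimes> ((b \<otimes> w) \<ominus> (c \<otimes> t)) = \<zero>"
      by (cases x, cases y, cases z) (auto simp: rel_iff)
    have c: "a \<in> carrier B" "b \<in> carrier B" "c \<in> carrier B" "s \<in> carrier B" "t \<in> carrier B" "w \<in> carrier B"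
      "u \<in> carrier B" "v \<in> carrier B" using xy SB by auto
    have "(u \<otimes> v \<otimes> t) \<otimes> ((a \<otimes> w) \<ominus> (c \<otimes> s)) =
       (v \<otimes> w) \<otimes> (u \<otimes> ((a \<otimes> t) \<ominus> (b \<otimes> s))) \<oplus> (u \<otimes> s) \<otimes> (v \<otimes> ((b \<otimes> w) \<ominus> (c \<otimes> t)))"
      using c by algebra
    also have "\<dots> = \<zero>" using xy c by simp
    finally have "(u \<otimes> v \<otimes> t) \<otimes> ((a \<otimes> w) \<ominus> (c \<otimes> s)) = \<zero>" .
    moreover have "u \<otimes> v \<otimes> t \<in> S" using xy mult_S by auto
    ultimately show "(x, z) \<in> loc_rel B S" using xy by (auto simp: rel_iff)
  qed
qed

lemma frac_eq: "\<lbrakk>a \<in> carrier B; s \<in> S; b \<in> carrier B; t \<in> S\<rbrakk> \<Longrightarrow>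
  fr a s = fr b t \<longleftrightarrow> (\<exists>u \<in> S. u \<otimes> ((a \<otimes> t) \<ominus> (b \<otimes> s)) = \<zero>)"
  unfolding loc_frac_def
  by (subst eq_equiv_class_iff[OF equiv_rel]) (auto simp: rel_iff)

lemma frac_cong: "\<lbrakk>a \<in> carrier B; s \<in> S; b \<in> carrier B; t \<in> S; a \<otimes> t = b \<otimes> s\<rbrakk> \<Longrightarrow> fr a s = fr b t"
  by (subst frac_eq) (auto intro!: bexI[of _ \<one>] simp: one_S SB)

lemma frac_mem_iff: "(b, t) \<in> fr a s \<longleftrightarrow> ((a, s), (b, t)) \<in> loc_rel B S"
  unfolding loc_frac_def by auto

lemma frac_self: "\<lbrakk>a \<in> carrier B; s \<in> S\<rbrakk> \<Longrightarrow> (a, s) \<in> fr a s"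
  unfolding loc_frac_def by (rule equiv_class_self[OF equiv_rel]) auto

lemma frac_eqI: "\<lbrakk>u \<otimes> ((a \<otimes> t) \<ominus> (b \<otimes> s)) = \<zero>; u \<in> S; a \<in> carrier B; s \<in> S; b \<in> carrier B; t \<in> S\<rbrakk> \<Longrightarrow> fr a s = fr b t"
  by (subst frac_eq) auto

lemma frac_memD: "(b, t) \<in> fr a s \<Longrightarrow> fr b t = fr a s"
  unfolding loc_frac_def using equiv_rel
  by (metis equiv_class_eq_iff Image_singleton_iff)

lemma frac_memD2: "(b, t) \<in> fr a s \<Longrightarrow> b \<in> carrier B \<and> t \<in> S"
  by (auto simp: frac_mem_iff rel_iff)

lemma carrier_L: "carrier L = {fr a s | a s. a \<in> carrier B \<and> s \<in> S}"
  unfolding localization_def by simp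

lemma carrier_LE: "x \<in> carrier L \<Longrightarrow> (\<And>a s. \<lbrakk>x = fr a s; a \<in> carrier B; s \<in> S\<rbrakk> \<Longrightarrow> P) \<Longrightarrow> P"
  unfolding carrier_L by auto

lemma frac_in_L: "\<lbrakk>a \<in> carrier B; s \<in> S\<rbrakk> \<Longrightarrow> fr a s \<in> carrier L"
  unfolding carrier_L by auto

lemma mult_wd: "\<lbrakk>(a', s') \<in> fr a s; (b', t') \<in> fr b t\<rbrakk> \<Longrightarrow> fr (a' \<otimes> b') (s' \<otimes> t') = fr (a \<otimes> b) (s \<otimes> t)"
proof -
  assume h: "(a', s') \<in> fr a s" "(b', t') \<in> fr b t"
  then obtain u v where uv: "a \<in> carrier B" "s \<in> S" "a' \<in> carrier B" "s' \<in> S" "u \<in> S"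
    "u \<otimes> ((a \<otimes> s') \<ominus> (a' \<otimes> s)) = \<zero>"
    "b \<in> carrier B" "t \<in> S" "b' \<in> carrier B" "t' \<in> S" "v \<in> S"
    "v \<otimes> ((b \<otimes> t') \<ominus> (b' \<otimes> t)) = \<zero>"
    by (auto simp: frac_mem_iff rel_iff)
  have c: "s \<in> carrier B" "s' \<in> carrier B" "t \<in> carrier B" "t' \<in> carrier B" "u \<in> carrier B" "v \<in> carrier B"
    using uv SB by auto
  have "(u \<otimes> v) \<otimes> ((a' \<otimes> b') \<otimes> (s \<otimes> t) \<ominus> (a \<otimes> b) \<otimes> (s' \<otimes> t')) =
     \<ominus> ((v \<otimes> b' \<otimes> t) \<otimes> (u \<otimes> ((a \<otimes> s') \<ominus> (a' \<otimes> s))) \<oplus> (u \<otimes> a \<otimes> s') \<otimes> (v \<otimes> ((b \<otimes> t') \<ominus> (b' \<otimes> t))))"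
    using c uv(1,3,7,9) by algebra
  also have "\<dots> = \<zero>" using uv c by (simp only: uv(6) uv(12)) simp
  finally show ?thesis by (rule frac_eqI) (use uv c mult_S in auto)
qed

lemma add_wd: "\<lbrakk>(a', s') \<in> fr a s; (b', t') \<in> fr b t\<rbrakk> \<Longrightarrow>
   fr ((a' \<otimes> t') \<oplus> (b' \<otimes> s')) (s' \<otimes> t') = fr ((a \<otimes> t) \<oplus> (b \<otimes> s)) (s \<otimes> t)"
proof -
  assume h: "(a', s') \<in> fr a s" "(b', t') \<in> fr b t"
  then obtain u v where uv: "a \<in> carrier B" "s \<in> S" "a' \<in> carrier B" "s' \<in> S" "u \<in> S"
    "u \<otimes> ((a \<otimes> s') \<ominus> (a' \<otimes> s)) = \<zero>"
    "b \<in> carrier B" "t \<in> S" "b' \<in> carrier B" "t' \<in> S" "v \<in> S"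
    "v \<otimes> ((b \<otimes> t') \<ominus> (b' \<otimes> t)) = \<zero>"
    by (auto simp: frac_mem_iff rel_iff)
  have c: "s \<in> carrier B" "s' \<in> carrier B" "t \<in> carrier B" "t' \<in> carrier B" "u \<in> carrier B" "v \<in> carrier B"
    using uv SB by auto
  have "(u \<otimes> v) \<otimes> (((a' \<otimes> t') \<oplus> (b' \<otimes> s')) \<otimes> (s \<otimes> t) \<ominus> ((a \<otimes> t) \<oplus> (b \<otimes> s)) \<otimes> (s' \<otimes> t')) =
     \<ominus> ((v \<otimes> t \<otimes> t') \<otimes> (u \<otimes> ((a \<otimes> s') \<ominus> (a' \<otimes> s))) \<oplus> (u \<otimes> s \<otimes> s') \<otimes> (v \<otimes> ((b \<otimes> t') \<ominus> (b' \<otimes> t))))"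
    using c uv(1,3,7,9) by algebra
  also have "\<dots> = \<zero>" using uv c by (simp only: uv(6) uv(12)) simp
  finally show ?thesis by (rule frac_eqI) (use uv c mult_S in auto)
qed

lemma mult_frac: "\<lbrakk>a \<in> carrier B; s \<in> S; b \<in> carrier B; t \<in> S\<rbrakk> \<Longrightarrow>
   fr a s \<otimes>\<^bsub>L\<^esub> fr b t = fr (a \<otimes> b) (s \<otimes> t)"
proof -
  assume h: "a \<in> carrier B" "s \<in> S" "b \<in> carrier B" "t \<in> S"
  have "fr a s \<otimes>\<^bsub>L\<^esub> fr b t = \<Union>{fr (a' \<otimes> b') (s' \<otimes> t') | a' s' b' t'. (a', s') \<in> fr a s \<and> (b', t') \<in> fr b t}"
    unfolding localization_def loc_mult_def by simp
  also have "\<dots> = \<Union>{fr (a \<otimes> b) (s \<otimes> t)}"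
    apply (rule arg_cong[where f = Union])
    using mult_wd frac_self[OF h(1,2)] frac_self[OF h(3,4)] by blast
  finally show ?thesis by simp
qed

lemma add_frac: "\<lbrakk>a \<in> carrier B; s \<in> S; b \<in> carrier B; t \<in> S\<rbrakk> \<Longrightarrow>
   fr a s \<oplus>\<^bsub>L\<^esub> fr b t = fr ((a \<otimes> t) \<oplus> (b \<otimes> s)) (s \<otimes> t)"
proof -
  assume h: "a \<in> carrier B" "s \<in> S" "b \<in> carrier B" "t \<in> S"
  have "fr a s \<oplus>\<^bsub>L\<^esub> fr b t = \<Union>{fr ((a' \<otimes> t') \<oplus> (b' \<otimes> s')) (s' \<otimes> t') | a' s' b' t'. (a', s') \<in> fr a s \<and> (b', t') \<in> fr b t}"
    unfolding localization_def loc_add_def by simp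
  also have "\<dots> = \<Union>{fr ((a \<otimes> t) \<oplus> (b \<otimes> s)) (s \<otimes> t)}"
    apply (rule arg_cong[where f = Union])
    using add_wd frac_self[OF h(1,2)] frac_self[OF h(3,4)] by blast
  finally show ?thesis by simp
qed

lemma zero_L: "\<zero>\<^bsub>L\<^esub> = fr \<zero> \<one>" unfolding localization_def by simp
lemma one_L: "\<one>\<^bsub>L\<^esub> = fr \<one> \<one>" unfolding localization_def by simp

lemma cring_L: "cring L"
proof (rule cringI)
  show "abelian_group L"
  proof (rule abelian_groupI)
    fix x y assume "x \<in> carrier L" "y \<in> carrier L"
    then show "x \<oplus>\<^bsub>L\<^esub> y \<in> carrier L"
      by (auto elim!: carrier_LE simp: add_frac SB mult_S intro!: frac_in_L)
  next
    show "\<zero>\<^bsub>L\<^esub> \<in> carrier L" by (simp add: zero_L frac_in_L one_S)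
  next
    fix x y z assume "x \<in> carrier L" "y \<in> carrier L" "z \<in> carrier L"
    then obtain a s b t c w where h: "x = fr a s" "y = fr b t" "z = fr c w" "a \<in> carrier B" "s \<in> S"
      "b \<in> carrier B" "t \<in> S" "c \<in> carrier B" "w \<in> S" by (metis carrier_LE)
    then have cc: "s \<in> carrier B" "t \<in> carrier B" "w \<in> carrier B" using SB by auto
    show "x \<oplus>\<^bsub>L\<^esub> y \<oplus>\<^bsub>L\<^esub> z = x \<oplus>\<^bsub>L\<^esub> (y \<oplus>\<^bsub>L\<^esub> z)"
      using h cc by (simp add: add_frac mult_S) (rule frac_cong, auto simp: mult_S, algebra)
  next
    fix x y assume "x \<in> carrier L" "y \<in> carrier L"
    then obtain a s b t where h: "x = fr a s" "y = fr b t" "a \<in> carrier B" "s \<in> S"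
      "b \<in> carrier B" "t \<in> S" by (metis carrier_LE)
    then have cc: "s \<in> carrier B" "t \<in> carrier B" using SB by auto
    show "x \<oplus>\<^bsub>L\<^esub> y = y \<oplus>\<^bsub>L\<^esub> x"
      using h cc by (simp add: add_frac mult_S) (rule frac_cong, auto simp: mult_S, algebra)
  next
    fix x assume "x \<in> carrier L"
    then obtain a s where h: "x = fr a s" "a \<in> carrier B" "s \<in> S" by (metis carrier_LE)
    then have cc: "s \<in> carrier B" using SB by auto
    show "\<zero>\<^bsub>L\<^esub> \<oplus>\<^bsub>L\<^esub> x = x"
      using h cc by (simp add: add_frac mult_S zero_L one_S) 
  next
    fix x assume "x \<in> carrier L"
    then obtain a s where h: "x = fr a s" "a \<in> carrier B" "s \<in> S" by (metis carrier_LE)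
    then have cc: "s \<in> carrier B" using SB by auto
    show "\<exists>y\<in>carrier L. y \<oplus>\<^bsub>L\<^esub> x = \<zero>\<^bsub>L\<^esub>"
    proof (intro bexI)
      show "fr (\<ominus> a) s \<in> carrier L" using h by (simp add: frac_in_L)
      show "fr (\<ominus> a) s \<oplus>\<^bsub>L\<^esub> x = \<zero>\<^bsub>L\<^esub>"
        using h cc by (simp add: add_frac mult_S zero_L one_S) (rule frac_cong, auto simp: mult_S one_S, algebra)
    qed
  qed
next
  show "comm_monoid L"
  proof (rule comm_monoidI)
    fix x y assume "x \<in> carrier L" "y \<in> carrier L"
    then show "x \<otimes>\<^bsub>L\<^esub> y \<in> carrier L"
      by (auto elim!: carrier_LE simp: mult_frac SB mult_S intro!: frac_in_L)
  next
    show "\<one>\<^bsub>L\<^esub> \<in> carrier L" by (simp add: one_L frac_in_L one_S)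
  next
    fix x y z assume "x \<in> carrier L" "y \<in> carrier L" "z \<in> carrier L"
    then obtain a s b t c w where h: "x = fr a s" "y = fr b t" "z = fr c w" "a \<in> carrier B" "s \<in> S"
      "b \<in> carrier B" "t \<in> S" "c \<in> carrier B" "w \<in> S" by (metis carrier_LE)
    then have cc: "s \<in> carrier B" "t \<in> carrier B" "w \<in> carrier B" using SB by auto
    show "x \<otimes>\<^bsub>L\<^esub> y \<otimes>\<^bsub>L\<^esub> z = x \<otimes>\<^bsub>L\<^esub> (y \<otimes>\<^bsub>L\<^esub> z)"
      using h cc by (simp add: mult_frac mult_S m_assoc)
  next
    fix x assume "x \<in> carrier L"
    then obtain a s where h: "x = fr a s" "a \<in> carrier B" "s \<in> S" by (metis carrier_LE)
    then have cc: "s \<in> carrier B" using SB by auto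
    show "\<one>\<^bsub>L\<^esub> \<otimes>\<^bsub>L\<^esub> x = x"
      using h cc by (simp add: mult_frac one_L one_S)
  next
    fix x y assume "x \<in> carrier L" "y \<in> carrier L"
    then obtain a s b t where h: "x = fr a s" "y = fr b t" "a \<in> carrier B" "s \<in> S"
      "b \<in> carrier B" "t \<in> S" by (metis carrier_LE)
    then have cc: "s \<in> carrier B" "t \<in> carrier B" using SB by auto
    show "x \<otimes>\<^bsub>L\<^esub> y = y \<otimes>\<^bsub>L\<^esub> x"
      using h cc by (simp add: mult_frac m_comm)
  qed
next
  fix x y z assume "x \<in> carrier L" "y \<in> carrier L" "z \<in> carrier L"
  then obtain a s b t c w where h: "x = fr a s" "y = fr b t" "z = fr c w" "a \<in> carrier B" "s \<in> S"
    "b \<in> carrier B" "t \<in> S" "c \<in> carrier B" "w \<in> S" by (metis carrier_LE)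
  then have cc: "s \<in> carrier B" "t \<in> carrier B" "w \<in> carrier B" using SB by auto
  show "(x \<oplus>\<^bsub>L\<^esub> y) \<otimes>\<^bsub>L\<^esub> z = x \<otimes>\<^bsub>L\<^esub> z \<oplus>\<^bsub>L\<^esub> y \<otimes>\<^bsub>L\<^esub> z"
    using h cc by (simp add: add_frac mult_frac mult_S) (rule frac_cong, auto simp: mult_S, algebra)
qed

end



lemma (in cring) idealI_simple:
  assumes "I \<subseteq> carrier R" "\<zero> \<in> I" "\<And>a b. \<lbrakk>a \<in> I; b \<in> I\<rbrakk> \<Longrightarrow> a \<oplus> b \<in> I"
    "\<And>a x. \<lbrakk>a \<in> I; x \<in> carrier R\<rbrakk> \<Longrightarrow> x \<otimes> a \<in> I"
  shows "ideal I R"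
proof (rule idealI[OF ring_axioms])
  show "subgroup I (add_monoid R)"
  proof (rule subgroup.intro)
    show "I \<subseteq> carrier (add_monoid R)" using assms by simp
    show "\<one>\<^bsub>add_monoid R\<^esub> \<in> I" using assms by simp
  next
    fix a b assume "a \<in> I" "b \<in> I"
    then show "a \<otimes>\<^bsub>add_monoid R\<^esub> b \<in> I" using assms by simp
  next
    fix a assume a: "a \<in> I"
    then have ac: "a \<in> carrier R" using assms by auto
    have "inv\<^bsub>add_monoid R\<^esub> a = (\<ominus> \<one>) \<otimes> a" using ac by (simp add: a_inv_def[symmetric] l_minus)
    then show "inv\<^bsub>add_monoid R\<^esub> a \<in> I" using assms(4)[OF a] by simp
  qed
next
  fix a x assume "a \<in> I" "x \<in> carrier R" then show "x \<otimes> a \<in> I" using assms by auto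
next
  fix a x assume "a \<in> I" "x \<in> carrier R" then have "x \<otimes> a \<in> I" using assms by auto
  moreover have "x \<otimes> a = a \<otimes> x" using \<open>a \<in> I\<close> \<open>x \<in> carrier R\<close> assms(1) m_comm by blast
  ultimately show "a \<otimes> x \<in> I" by simp
qed

lemma (in ring) ideal_finsum:
  assumes "ideal J R" "finite A" "\<And>i. i \<in> A \<Longrightarrow> f i \<in> J"
  shows "finsum R f A \<in> J"
  using assms(2,3)
proof (induction A rule: finite_induct)
  case empty
  then show ?case using assms(1) by (simp add: additive_subgroup.zero_closed ideal.axioms(1))
next
  case (insert x F)
  have fc: "f \<in> F \<rightarrow> carrier R" "f x \<in> carrier R" using insert.prems ideal.Icarr[OF assms(1)] by auto
  then have "finsum R f (insert x F) = f x \<oplus> finsum R f F" using insert by (simp add: finsum_insert)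
  then show ?case using insert assms(1) by (simp add: additive_subgroup.a_closed ideal.axioms(1))
qed

lemma (in cring) ideal_minus_closed: "\<lbrakk>ideal J R; a \<in> J; b \<in> J\<rbrakk> \<Longrightarrow> a \<ominus> b \<in> J"
  unfolding minus_eq
  by (intro additive_subgroup.a_closed[OF ideal.axioms(1)] additive_subgroup.a_inv_closed[OF ideal.axioms(1)])

lemma (in cring) ideal_unit_cancel:
  assumes "ideal J R" "u \<in> Units R" "x \<in> carrier R" "u \<otimes> x \<in> J"
  shows "x \<in> J"
proof -
  have ic: "inv u \<in> carrier R" "u \<in> carrier R" using Units_inv_closed[OF assms(2)] Units_closed[OF assms(2)] .
  have "inv u \<otimes> (u \<otimes> x) = (inv u \<otimes> u) \<otimes> x" using ic assms(3) by (rule m_assoc[symmetric])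
  also have "\<dots> = x" using assms(2,3) by (simp only: Units_l_inv l_one)
  finally have e: "inv u \<otimes> (u \<otimes> x) = x" .
  have "inv u \<otimes> (u \<otimes> x) \<in> J" by (rule ideal.I_l_closed[OF assms(1) assms(4) ic(1)])
  then show ?thesis using e by simp
qed

lemma (in ring) ideal_unit_carrier: assumes "ideal J R" "u \<in> Units R" "u \<in> J" shows "J = carrier R"
proof -
  have "inv u \<otimes> u \<in> J" by (rule ideal.I_l_closed[OF assms(1) assms(3) Units_inv_closed[OF assms(2)]])
  then have "\<one> \<in> J" using assms(2) by simp
  then show ?thesis using assms(1) ideal.one_imp_carrier by blast
qed

lemma prime_vimage:
  assumes "cring A" "cring C" "h \<in> ring_hom A C" "primeideal Q C"
  shows "primeideal {a \<in> carrier A. h a \<in> Q} A"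
proof (rule primeidealI)
  have rA: "ring A" and rC: "ring C" using assms cring.axioms(1) by auto
  show "ideal {a \<in> carrier A. h a \<in> Q} A"
    by (rule ring_hom_ring.ideal_vimage[OF ring_hom_ringI2[OF rA rC assms(3)]])
       (rule primeideal.axioms(1)[OF assms(4)])
  show "cring A" by fact
  have Qi: "ideal Q C" by (rule primeideal.axioms(1)[OF assms(4)])
  show "carrier A \<noteq> {a \<in> carrier A. h a \<in> Q}"
  proof
    assume e: "carrier A = {a \<in> carrier A. h a \<in> Q}"
    have "\<one>\<^bsub>A\<^esub> \<in> carrier A" by (rule monoid.one_closed[OF ring.is_monoid[OF rA]])
    then have "\<one>\<^bsub>A\<^esub> \<in> {a \<in> carrier A. h a \<in> Q}" by (subst e[symmetric])
    then have "h \<one>\<^bsub>A\<^esub> \<in> Q" by blast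
    moreover have "h \<one>\<^bsub>A\<^esub> = \<one>\<^bsub>C\<^esub>" by (rule ring_hom_one[OF assms(3)])
    ultimately have "carrier C = Q" using ideal.one_imp_carrier[OF Qi] by simp
    then show False using primeideal.I_notcarr[OF assms(4)] by simp
  qed
  fix a b assume ab: "a \<in> carrier A" "b \<in> carrier A" "a \<otimes>\<^bsub>A\<^esub> b \<in> {a \<in> carrier A. h a \<in> Q}"
  have "h a \<in> carrier C" "h b \<in> carrier C" "h (a \<otimes>\<^bsub>A\<^esub> b) \<in> Q" 
    using ab ring_hom_closed[OF assms(3)] by auto
  moreover have "h (a \<otimes>\<^bsub>A\<^esub> b) = h a \<otimes>\<^bsub>C\<^esub> h b" using ab(1,2) by (rule ring_hom_mult[OF assms(3)])
  ultimately have "h a \<in> Q \<or> h b \<in> Q" using primeideal.I_prime[OF assms(4)] by metis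
  then show "a \<in> {a \<in> carrier A. h a \<in> Q} \<or> b \<in> {a \<in> carrier A. h a \<in> Q}" using ab by blast
qed

lemma (in cring) krull:
  assumes "ideal I R" "I \<noteq> carrier R"
  shows "\<exists>M. maximalideal M R \<and> I \<subseteq> M"
proof -
  define A where "A = {J. ideal J R \<and> I \<subseteq> J \<and> \<one> \<notin> J}"
  have oneI: "\<one> \<notin> I" using assms ideal.one_imp_carrier[OF assms(1)] by metis
  have "\<exists>M\<in>A. \<forall>Z\<in>A. M \<subseteq> Z \<longrightarrow> Z = M"
  proof (rule subset_Zorn_nonempty)
    show "A \<noteq> {}" using assms oneI unfolding A_def by auto
    fix C assume C: "C \<noteq> {}" "subset.chain A C"
    have ch: "\<And>W Y. W \<in> C \<Longrightarrow> Y \<in> C \<Longrightarrow> W \<subseteq> Y \<or> Y \<subseteq> W" "\<And>W. W \<in> C \<Longrightarrow> W \<in> A"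
      using C(2) unfolding subset_chain_def by auto
    have chi: "\<And>W. W \<in> C \<Longrightarrow> ideal W R" using ch(2) unfolding A_def by simp
    have "ideal (\<Union>C) R"
    proof (rule idealI_simple)
      show "\<Union>C \<subseteq> carrier R"
      proof
        fix x assume "x \<in> \<Union>C"
        then obtain W where "W \<in> C" "x \<in> W" by auto
        then show "x \<in> carrier R" using ideal.Icarr[OF chi] by metis
      qed
      obtain W where W: "W \<in> C" using C(1) by blast
      have "\<zero> \<in> W" by (rule additive_subgroup.zero_closed[OF ideal.axioms(1)[OF chi[OF W]]])
      then show "\<zero> \<in> \<Union>C" using W by blast
    next
      fix a b assume "a \<in> \<Union>C" "b \<in> \<Union>C"
      then obtain W Y where XY: "W \<in> C" "Y \<in> C" "a \<in> W" "b \<in> Y" by auto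
      then obtain Z where Z: "Z \<in> C" "a \<in> Z" "b \<in> Z" using ch(1)[OF XY(1,2)] by blast
      have "a \<oplus> b \<in> Z" by (rule additive_subgroup.a_closed[OF ideal.axioms(1)[OF chi[OF Z(1)]] Z(2,3)])
      then show "a \<oplus> b \<in> \<Union>C" using Z by blast
    next
      fix a x assume "a \<in> \<Union>C" "x \<in> carrier R"
      then obtain W where W: "W \<in> C" "a \<in> W" by auto
      have "x \<otimes> a \<in> W" by (rule ideal.I_l_closed[OF chi[OF W(1)] W(2) \<open>x \<in> carrier R\<close>])
      then show "x \<otimes> a \<in> \<Union>C" using W by blast
    qed
    moreover have "I \<subseteq> \<Union>C" using C(1) ch(2) unfolding A_def by blast
    moreover have "\<one> \<notin> \<Union>C" using ch(2) unfolding A_def by blast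
    ultimately show "\<Union>C \<in> A" unfolding A_def by simp
  qed
  then obtain M where M: "M \<in> A" "\<And>W. W \<in> A \<Longrightarrow> M \<subseteq> W \<Longrightarrow> W = M" by blast
  have Mi: "ideal M R" using M unfolding A_def by simp
  have "maximalideal M R"
  proof (rule maximalidealI)
    show "ideal M R" by (rule Mi)
    show "carrier R \<noteq> M" using M(1) unfolding A_def by auto
    fix J assume J: "ideal J R" "M \<subseteq> J" "J \<subseteq> carrier R"
    show "J = M \<or> J = carrier R"
    proof (cases "\<one> \<in> J")
      case True then show ?thesis using ideal.one_imp_carrier[OF J(1)] by simp
    next
      case False then have "J \<in> A" using J M(1) unfolding A_def by auto
      then show ?thesis using M(2) J(2) by simp
    qed
  qed
  then show ?thesis using M unfolding A_def by auto
qed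

locale lring = cring R for R (structure) +
  fixes M assumes maxM: "maximalideal M R" and uniqM: "\<And>N. maximalideal N R \<Longrightarrow> N = M"
begin

lemma M_ideal: "ideal M R" using maxM maximalideal.axioms(1) by metis
lemma M_carr: "M \<subseteq> carrier R" using ideal.Icarr[OF M_ideal] by auto
lemma one_notin_M: "\<one> \<notin> M"
  using maximalideal.I_notcarr[OF maxM] ideal.one_imp_carrier[OF M_ideal] by metis

lemma nonM_unit: assumes "x \<in> carrier R" "x \<notin> M" shows "x \<in> Units R"
proof (rule ccontr)
  assume nu: "x \<notin> Units R"
  have "PIdl x \<noteq> carrier R"
  proof
    assume "PIdl x = carrier R"
    then have "\<one> \<in> PIdl x" by simp
    then obtain y where "y \<in> carrier R" "\<one> = y \<otimes> x" unfolding cgenideal_def by auto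
    then have "x \<in> Units R" unfolding Units_def using assms m_comm by auto
    then show False using nu by simp
  qed
  then obtain N where N: "maximalideal N R" "PIdl x \<subseteq> N" using krull[OF cgenideal_ideal[OF assms(1)]] by blast
  have "x \<in> PIdl x" by (rule cgenideal_self[OF assms(1)])
  then have "x \<in> M" using uniqM[OF N(1)] N(2) by blast
  then show False using assms by simp
qed

lemma unit_notin_M: "u \<in> Units R \<Longrightarrow> u \<notin> M"
  using ideal_unit_carrier[OF M_ideal] maximalideal.I_notcarr[OF maxM] by metis

lemma unit_minus_M: assumes "u \<in> Units R" "m \<in> M" shows "u \<ominus> m \<in> Units R"
proof -
  have c: "u \<in> carrier R" "m \<in> carrier R" using assms M_carr by auto
  have "u \<ominus> m \<notin> M"
  proof
    assume "u \<ominus> m \<in> M"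
    then have "(u \<ominus> m) \<oplus> m \<in> M" 
      by (rule additive_subgroup.a_closed[OF ideal.axioms(1)[OF M_ideal] _ assms(2)])
    moreover have "(u \<ominus> m) \<oplus> m = u" using c by algebra
    ultimately show False using unit_notin_M assms by simp
  qed
  then show ?thesis using nonM_unit c by simp
qed

lemma unit_or_M: "x \<in> carrier R \<Longrightarrow> x \<in> Units R \<or> x \<in> M"
  using nonM_unit by blast

end

lemma local_ring_lring: assumes "local_ring R" obtains M where "lring R M"
proof -
  obtain M where "maximalideal M R" "\<And>N. maximalideal N R \<Longrightarrow> N = M" using assms unfolding local_ring_def by metis
  then show ?thesis using that assms unfolding local_ring_def lring_def lring_axioms_def by blast
qed



definition loc_ext :: "('a, 'm) ring_scheme \<Rightarrow> 'a set \<Rightarrow> 'a set \<Rightarrow> ('a \<times> 'a) set set" where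
  "loc_ext B S I = {loc_frac B S a s | a s. a \<in> I \<and> s \<in> S}"

context locS
begin

lemma loc_map_frac: "loc_map B S a = fr a \<one>" unfolding loc_map_def by simp

lemma hom_L: "loc_map B S \<in> ring_hom B L"
proof (rule ring_hom_memI)
  fix x assume "x \<in> carrier B" then show "loc_map B S x \<in> carrier L" by (simp add: loc_map_frac frac_in_L one_S)
next
  fix x y assume "x \<in> carrier B" "y \<in> carrier B"
  then show "loc_map B S (x \<otimes> y) = loc_map B S x \<otimes>\<^bsub>L\<^esub> loc_map B S y"
    by (simp add: loc_map_frac mult_frac one_S)
next
  fix x y assume "x \<in> carrier B" "y \<in> carrier B"
  then show "loc_map B S (x \<oplus> y) = loc_map B S x \<oplus>\<^bsub>L\<^esub> loc_map B S y"
    by (simp add: loc_map_frac add_frac one_S)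
next
  show "loc_map B S \<one> = \<one>\<^bsub>L\<^esub>" by (simp add: loc_map_frac one_L)
qed

lemma frac_zero_iff: "\<lbrakk>a \<in> carrier B; s \<in> S\<rbrakk> \<Longrightarrow> fr a s = \<zero>\<^bsub>L\<^esub> \<longleftrightarrow> (\<exists>u\<in>S. u \<otimes> a = \<zero>)"
proof -
  assume h: "a \<in> carrier B" "s \<in> S"
  have "fr a s = \<zero>\<^bsub>L\<^esub> \<longleftrightarrow> (\<exists>u\<in>S. u \<otimes> ((a \<otimes> \<one>) \<ominus> (\<zero> \<otimes> s)) = \<zero>)"
    unfolding zero_L using h one_S by (intro frac_eq) auto
  also have "\<dots> \<longleftrightarrow> (\<exists>u\<in>S. u \<otimes> a = \<zero>)"
  proof -
    have "\<And>u. u \<in> S \<Longrightarrow> u \<otimes> ((a \<otimes> \<one>) \<ominus> (\<zero> \<otimes> s)) = u \<otimes> a" using h SB by algebra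
    then show ?thesis by auto
  qed
  finally show ?thesis .
qed

lemma frac_split: "\<lbrakk>a \<in> carrier B; s \<in> S\<rbrakk> \<Longrightarrow> fr a s \<otimes>\<^bsub>L\<^esub> fr s \<one> = fr a \<one>"
  by (simp add: mult_frac one_S SB) (rule frac_cong, auto simp: one_S mult_S SB m_comm)

lemma frac_inv1: "\<lbrakk>a \<in> S; s \<in> S\<rbrakk> \<Longrightarrow> fr a s \<otimes>\<^bsub>L\<^esub> fr s a = \<one>\<^bsub>L\<^esub>"
proof -
  assume h: "a \<in> S" "s \<in> S"
  have "fr a s \<otimes>\<^bsub>L\<^esub> fr s a = fr (a \<otimes> s) (s \<otimes> a)" using h SB by (simp add: mult_frac)
  also have "\<dots> = fr \<one> \<one>" by (rule frac_cong) (use h SB mult_S one_S m_comm in auto)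
  finally show ?thesis by (simp add: one_L)
qed

lemma frac_unit: "\<lbrakk>a \<in> S; s \<in> S\<rbrakk> \<Longrightarrow> fr a s \<in> Units L"
proof -
  assume h: "a \<in> S" "s \<in> S"
  have "fr a s \<otimes>\<^bsub>L\<^esub> fr s a = \<one>\<^bsub>L\<^esub>" "fr s a \<otimes>\<^bsub>L\<^esub> fr a s = \<one>\<^bsub>L\<^esub>"
    using h frac_inv1 by auto
  then show ?thesis unfolding Units_def using h SB frac_in_L by auto
qed

lemma frac_unit_inv: "\<lbrakk>a \<in> S; s \<in> S\<rbrakk> \<Longrightarrow> inv\<^bsub>L\<^esub> (fr a s) = fr s a"
proof -
  assume h: "a \<in> S" "s \<in> S"
  interpret L: cring L by (rule cring_L)
  have "fr a s \<otimes>\<^bsub>L\<^esub> fr s a = \<one>\<^bsub>L\<^esub>" using h frac_inv1 by auto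
  then show ?thesis using h SB frac_in_L L.inv_char L.m_comm by (metis)
qed

lemma ideal_ext: assumes "ideal I B" shows "ideal (loc_ext B S I) L"
proof -
  interpret L: cring L by (rule cring_L)
  have IB: "\<And>a. a \<in> I \<Longrightarrow> a \<in> carrier B" using ideal.Icarr[OF assms] by auto
  show ?thesis
  proof (rule L.idealI_simple)
    show "loc_ext B S I \<subseteq> carrier L" unfolding loc_ext_def using IB frac_in_L by auto
    have "\<zero> \<in> I" by (rule additive_subgroup.zero_closed[OF ideal.axioms(1)[OF assms]])
    then show "\<zero>\<^bsub>L\<^esub> \<in> loc_ext B S I" unfolding zero_L loc_ext_def using one_S by auto
  next
    fix x y assume "x \<in> loc_ext B S I" "y \<in> loc_ext B S I"
    then obtain a s b t where h: "x = fr a s" "y = fr b t" "a \<in> I" "s \<in> S" "b \<in> I" "t \<in> S"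
      unfolding loc_ext_def by auto
    have "a \<otimes> t \<in> I" "b \<otimes> s \<in> I" using h SB ideal.I_r_closed[OF assms] by auto
    then have "a \<otimes> t \<oplus> b \<otimes> s \<in> I" by (rule additive_subgroup.a_closed[OF ideal.axioms(1)[OF assms]])
    moreover have "x \<oplus>\<^bsub>L\<^esub> y = fr (a \<otimes> t \<oplus> b \<otimes> s) (s \<otimes> t)" using h IB by (simp add: add_frac)
    ultimately show "x \<oplus>\<^bsub>L\<^esub> y \<in> loc_ext B S I" unfolding loc_ext_def using h mult_S by blast
  next
    fix x y assume "x \<in> loc_ext B S I" "y \<in> carrier L"
    then obtain a s b t where h: "x = fr a s" "y = fr b t" "a \<in> I" "s \<in> S" "b \<in> carrier B" "t \<in> S"
      unfolding loc_ext_def by (auto elim: carrier_LE)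
    have "b \<otimes> a \<in> I" using h ideal.I_l_closed[OF assms] by auto
    moreover have "y \<otimes>\<^bsub>L\<^esub> x = fr (b \<otimes> a) (t \<otimes> s)" using h IB by (simp add: mult_frac)
    ultimately show "y \<otimes>\<^bsub>L\<^esub> x \<in> loc_ext B S I" unfolding loc_ext_def using h mult_S by blast
  qed
qed

lemma ext_memD: assumes "ideal I B" "b \<in> carrier B" "t \<in> S" "fr b t \<in> loc_ext B S I"
  shows "\<exists>u\<in>S. u \<otimes> b \<in> I"
proof -
  obtain a s where h: "fr b t = fr a s" "a \<in> I" "s \<in> S" using assms(4) unfolding loc_ext_def by auto
  have ac: "a \<in> carrier B" using h ideal.Icarr[OF assms(1)] by auto
  obtain w where w: "w \<in> S" "w \<otimes> ((b \<otimes> s) \<ominus> (a \<otimes> t)) = \<zero>" using h(1) frac_eq ac h assms by auto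
  have wc: "w \<in> carrier B" "s \<in> carrier B" "t \<in> carrier B" using w h assms SB by auto
  have "(w \<otimes> s) \<otimes> b = w \<otimes> ((b \<otimes> s) \<ominus> (a \<otimes> t)) \<oplus> (w \<otimes> t) \<otimes> a"
    using wc ac assms(2) by algebra
  also have "\<dots> = (w \<otimes> t) \<otimes> a" using w(2) wc ac by simp
  finally have e: "(w \<otimes> s) \<otimes> b = (w \<otimes> t) \<otimes> a" .
  have "(w \<otimes> t) \<otimes> a \<in> I" by (rule ideal.I_l_closed[OF assms(1) h(2)]) (use wc in simp)
  then have "(w \<otimes> s) \<otimes> b \<in> I" using e by simp
  moreover have "w \<otimes> s \<in> S" using w h mult_S by auto
  ultimately show ?thesis by blast
qed

lemma prime_ext:
  assumes "primeideal q B" "q \<inter> S = {}"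
  shows "primeideal (loc_ext B S q) L" and "{a \<in> carrier B. loc_map B S a \<in> loc_ext B S q} = q"
proof -
  have qi: "ideal q B" by (rule primeideal.axioms(1)[OF assms(1)])
  have memq: "\<And>b t. b \<in> carrier B \<Longrightarrow> t \<in> S \<Longrightarrow> fr b t \<in> loc_ext B S q \<longleftrightarrow> b \<in> q"
  proof
    fix b t assume bt: "b \<in> carrier B" "t \<in> S" "fr b t \<in> loc_ext B S q"
    then obtain u where u: "u \<in> S" "u \<otimes> b \<in> q" using ext_memD[OF qi] by blast
    then have "u \<in> q \<or> b \<in> q" using primeideal.I_prime[OF assms(1)] SB bt by auto
    then show "b \<in> q" using u assms(2) by auto
  next
    fix b t assume "b \<in> carrier B" "t \<in> S" "b \<in> q"
    then show "fr b t \<in> loc_ext B S q" unfolding loc_ext_def by auto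
  qed
  show "{a \<in> carrier B. loc_map B S a \<in> loc_ext B S q} = q"
    using memq one_S ideal.Icarr[OF qi] by (auto simp: loc_map_frac)
  show "primeideal (loc_ext B S q) L"
  proof (rule primeidealI)
    show "ideal (loc_ext B S q) L" by (rule ideal_ext[OF qi])
    show "cring L" by (rule cring_L)
    have "\<one> \<notin> q" using primeideal.I_notcarr[OF assms(1)] ideal.one_imp_carrier[OF qi] by metis
    then have "\<one>\<^bsub>L\<^esub> \<notin> loc_ext B S q" using memq one_S by (simp add: one_L)
    moreover have "\<one>\<^bsub>L\<^esub> \<in> carrier L" by (simp add: one_L frac_in_L one_S)
    ultimately show "carrier L \<noteq> loc_ext B S q" by blast
    fix x y assume xy: "x \<in> carrier L" "y \<in> carrier L" "x \<otimes>\<^bsub>L\<^esub> y \<in> loc_ext B S q"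
    then obtain a s b t where h: "x = fr a s" "y = fr b t" "a \<in> carrier B" "s \<in> S" "b \<in> carrier B" "t \<in> S"
      by (auto elim!: carrier_LE)
    then have "a \<otimes> b \<in> q" using xy memq mult_S by (auto simp: mult_frac)
    then have "a \<in> q \<or> b \<in> q" using primeideal.I_prime[OF assms(1)] h by auto
    then show "x \<in> loc_ext B S q \<or> y \<in> loc_ext B S q" using memq h by auto
  qed
qed

end



definition polyI :: "('a, 'm) ring_scheme \<Rightarrow> 'a set \<Rightarrow> (nat \<Rightarrow> 'a) set" where
  "polyI R J = {f \<in> carrier (UP R). \<forall>i. f i \<in> J}"

locale nag = lring R M for R (structure) and M

sublocale nag \<subseteq> U: UP_cring R "UP R" by unfold_locales

context nag
begin

lemma carrier_UP: "carrier (UP R) = up R" unfolding UP_def by (simp only: partial_object.simps)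
lemma coeff_UP_eq: "up_ring.coeff (UP R) = (\<lambda>p\<in>up R. \<lambda>n. p n)" unfolding UP_def by (simp only: up_ring.simps)
lemma coeff_UP: "f \<in> carrier (UP R) \<Longrightarrow> up_ring.coeff (UP R) f = f"
  unfolding coeff_UP_eq carrier_UP by simp

lemma UP_closed: "f \<in> carrier (UP R) \<Longrightarrow> f n \<in> carrier R"
  unfolding carrier_UP up_def by auto

lemma mult_coeff: "\<lbrakk>f \<in> carrier (UP R); g \<in> carrier (UP R)\<rbrakk> \<Longrightarrow>
   (f \<otimes>\<^bsub>UP R\<^esub> g) n = (\<Oplus>i \<in> {..n}. f i \<otimes> g (n - i))"
  using U.coeff_mult[of f g n] by (simp add: coeff_UP)

lemma add_coeff: "\<lbrakk>f \<in> carrier (UP R); g \<in> carrier (UP R)\<rbrakk> \<Longrightarrow>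
   (f \<oplus>\<^bsub>UP R\<^esub> g) n = f n \<oplus> g n"
  using U.coeff_add[of f g n] by (simp add: coeff_UP)

lemma zero_coeff: "\<zero>\<^bsub>UP R\<^esub> n = \<zero>" using U.coeff_zero[of n] coeff_UP[OF U.zero_closed] by simp
lemma one_coeff: "\<one>\<^bsub>UP R\<^esub> n = (if n = 0 then \<one> else \<zero>)" using U.coeff_one[of n] coeff_UP[OF U.one_closed] by simp
lemma monom_coeff: "a \<in> carrier R \<Longrightarrow> up_ring.monom (UP R) a m n = (if m = n then a else \<zero>)"
  using U.coeff_monom[of a m n] coeff_UP[OF U.monom_closed[of a m]] by simp
lemma smult_coeff: "\<lbrakk>a \<in> carrier R; f \<in> carrier (UP R)\<rbrakk> \<Longrightarrow> (a \<odot>\<^bsub>UP R\<^esub> f) n = a \<otimes> f n"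
  using U.coeff_smult[of a f n] coeff_UP[OF U.smult_closed[of a f]] coeff_UP[of f] by simp
lemma deg_above: "\<lbrakk>f \<in> carrier (UP R); deg R f < n\<rbrakk> \<Longrightarrow> f n = \<zero>"
proof -
  assume h: "f \<in> carrier (UP R)" "deg R f < n"
  have "up_ring.coeff (UP R) f n = \<zero>" by (rule U.deg_aboveD[OF h(2) h(1)])
  then show ?thesis using coeff_UP[OF h(1)] by simp
qed

lemma ideal_polyI: assumes "ideal J R" shows "ideal (polyI R J) (UP R)"
proof (rule U.P.idealI_simple)
  show "polyI R J \<subseteq> carrier (UP R)" unfolding polyI_def by auto
  have "\<zero> \<in> J" by (rule additive_subgroup.zero_closed[OF ideal.axioms(1)[OF assms]])
  then show "\<zero>\<^bsub>UP R\<^esub> \<in> polyI R J" unfolding polyI_def by (simp add: zero_coeff)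
next
  fix a b assume "a \<in> polyI R J" "b \<in> polyI R J"
  then have ab: "a \<in> carrier (UP R)" "b \<in> carrier (UP R)" "\<And>i. a i \<in> J" "\<And>i. b i \<in> J" unfolding polyI_def by auto
  have "\<And>i. (a \<oplus>\<^bsub>UP R\<^esub> b) i \<in> J"
  proof -
    fix i
    have "a i \<oplus> b i \<in> J" by (rule additive_subgroup.a_closed[OF ideal.axioms(1)[OF assms] ab(3) ab(4)])
    then show "(a \<oplus>\<^bsub>UP R\<^esub> b) i \<in> J" using add_coeff[OF ab(1,2)] by simp
  qed
  moreover have "a \<oplus>\<^bsub>UP R\<^esub> b \<in> carrier (UP R)" using ab U.add.m_closed by simp
  ultimately show "a \<oplus>\<^bsub>UP R\<^esub> b \<in> polyI R J" unfolding polyI_def by blast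
next
  fix a x assume a: "a \<in> polyI R J" and x: "x \<in> carrier (UP R)"
  have "\<And>n. (x \<otimes>\<^bsub>UP R\<^esub> a) n \<in> J"
  proof -
    fix n
    have "(x \<otimes>\<^bsub>UP R\<^esub> a) n = (\<Oplus>i \<in> {..n}. x i \<otimes> a (n - i))" using a x by (simp add: mult_coeff polyI_def)
    also have "\<dots> \<in> J"
    proof (rule ideal_finsum[OF assms])
      fix i assume "i \<in> {..n}"
      have "a (n - i) \<in> J" "x i \<in> carrier R" using a x UP_closed unfolding polyI_def by auto
      then show "x i \<otimes> a (n - i) \<in> J" by (rule ideal.I_l_closed[OF assms])
    qed simp
    finally show "(x \<otimes>\<^bsub>UP R\<^esub> a) n \<in> J" .
  qed
  moreover have "x \<otimes>\<^bsub>UP R\<^esub> a \<in> carrier (UP R)" using a x U.m_closed unfolding polyI_def by simp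
  ultimately show "x \<otimes>\<^bsub>UP R\<^esub> a \<in> polyI R J" unfolding polyI_def by blast
qed

lemma polyI_carr: "f \<in> polyI R J \<Longrightarrow> f \<in> carrier (UP R)" unfolding polyI_def by simp
lemma polyI_coeff: "f \<in> polyI R J \<Longrightarrow> f i \<in> J" unfolding polyI_def by simp

lemma finsum_split_one:
  fixes i0 n :: nat
  assumes "i0 \<le> n" "\<And>i. i \<le> n \<Longrightarrow> g i \<in> carrier R"
  shows "(\<Oplus>i \<in> {..n}. g i) = g i0 \<oplus> (\<Oplus>i \<in> {..n} - {i0}. g i)"
proof -
  have e: "{..n} = insert i0 ({..n} - {i0})" using assms(1) by auto
  have "(\<Oplus>i \<in> insert i0 ({..n} - {i0}). g i) = g i0 \<oplus> (\<Oplus>i \<in> {..n} - {i0}. g i)"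
    by (rule finsum_insert) (use assms in auto)
  then show ?thesis using e by simp
qed

lemma prime_polyI: assumes "primeideal q R" shows "primeideal (polyI R q) (UP R)"
proof -
  have qi: "ideal q R" by (rule primeideal.axioms(1)[OF assms])
  show ?thesis
  proof (rule primeidealI)
    show "ideal (polyI R q) (UP R)" by (rule ideal_polyI[OF qi])
    show "cring (UP R)" by (rule U.UP_cring)
    have "\<one> \<notin> q" using primeideal.I_notcarr[OF assms] ideal.one_imp_carrier[OF qi] by metis
    then have "\<one>\<^bsub>UP R\<^esub> \<notin> polyI R q" using polyI_coeff[of _ q 0] one_coeff by force
    then show "carrier (UP R) \<noteq> polyI R q" using U.one_closed by blast
    fix f g assume fg: "f \<in> carrier (UP R)" "g \<in> carrier (UP R)" "f \<otimes>\<^bsub>UP R\<^esub> g \<in> polyI R q"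
    show "f \<in> polyI R q \<or> g \<in> polyI R q"
    proof (rule ccontr)
      assume "\<not> (f \<in> polyI R q \<or> g \<in> polyI R q)"
      then have ex: "\<exists>i. f i \<notin> q" "\<exists>j. g j \<notin> q" using fg unfolding polyI_def by auto
      define i0 where "i0 = (LEAST i. f i \<notin> q)"
      define j0 where "j0 = (LEAST j. g j \<notin> q)"
      have i0: "f i0 \<notin> q" "\<And>i. i < i0 \<Longrightarrow> f i \<in> q"
        unfolding i0_def using ex(1) LeastI_ex not_less_Least by (metis, metis)
      have j0: "g j0 \<notin> q" "\<And>j. j < j0 \<Longrightarrow> g j \<in> q"
        unfolding j0_def using ex(2) LeastI_ex not_less_Least by (metis, metis)
      define n where "n = i0 + j0"
      have gc: "\<And>i. f i \<otimes> g (n - i) \<in> carrier R" using fg UP_closed by simp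
      have "(f \<otimes>\<^bsub>UP R\<^esub> g) n = (\<Oplus>i \<in> {..n}. f i \<otimes> g (n - i))" using fg mult_coeff by simp
      also have "\<dots> = f i0 \<otimes> g j0 \<oplus> (\<Oplus>i \<in> {..n} - {i0}. f i \<otimes> g (n - i))"
        using finsum_split_one[of i0 n "\<lambda>i. f i \<otimes> g (n - i)"] gc n_def by simp
      finally have e: "(f \<otimes>\<^bsub>UP R\<^esub> g) n = f i0 \<otimes> g j0 \<oplus> (\<Oplus>i \<in> {..n} - {i0}. f i \<otimes> g (n - i))" .
      have rest: "(\<Oplus>i \<in> {..n} - {i0}. f i \<otimes> g (n - i)) \<in> q"
      proof (rule ideal_finsum[OF qi])
        fix i assume i: "i \<in> {..n} - {i0}"
        show "f i \<otimes> g (n - i) \<in> q"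
        proof (cases "i < i0")
          case True
          then show ?thesis using i0(2) ideal.I_r_closed[OF qi] fg UP_closed by simp
        next
          case False
          then have "n - i < j0" using i n_def by auto
          then show ?thesis using j0(2) ideal.I_l_closed[OF qi] fg UP_closed by simp
        qed
      qed simp
      have tot: "(f \<otimes>\<^bsub>UP R\<^esub> g) n \<in> q" using fg(3) polyI_coeff by blast
      have c1: "f i0 \<otimes> g j0 \<in> carrier R" using fg UP_closed by simp
      have c2: "(\<Oplus>i \<in> {..n} - {i0}. f i \<otimes> g (n - i)) \<in> carrier R" using rest ideal.Icarr[OF qi] by blast
      have alg: "\<And>x y. x \<in> carrier R \<Longrightarrow> y \<in> carrier R \<Longrightarrow> x = (x \<oplus> y) \<ominus> y" by algebra
      have "f i0 \<otimes> g j0 = (f \<otimes>\<^bsub>UP R\<^esub> g) n \<ominus> (\<Oplus>i \<in> {..n} - {i0}. f i \<otimes> g (n - i))"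
        unfolding e by (rule alg[OF c1 c2])
      then have "f i0 \<otimes> g j0 \<in> q" using ideal_minus_closed[OF qi tot rest] by simp
      then show False using primeideal.I_prime[OF assms] i0(1) j0(1) fg UP_closed by blast
    qed
  qed
qed

lemma M_prime: "primeideal M R" by (rule maximalideal_prime[OF maxM])

lemma Sigma_iff: "s \<in> Sigma_set R \<longleftrightarrow> s \<in> carrier (UP R) \<and> s \<notin> polyI R M"
proof
  assume "s \<in> Sigma_set R"
  then have s: "s \<in> carrier (UP R)" "Idl {s i | i. i \<le> deg R s} = carrier R"
    unfolding Sigma_set_def content_ideal_def by auto
  have "s \<notin> polyI R M"
  proof
    assume "s \<in> polyI R M"
    then have "{s i | i. i \<le> deg R s} \<subseteq> M" using polyI_coeff by blast
    then have "Idl {s i | i. i \<le> deg R s} \<subseteq> M" by (rule genideal_minimal[OF M_ideal])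
    then show False using s(2) M_carr one_notin_M by auto
  qed
  then show "s \<in> carrier (UP R) \<and> s \<notin> polyI R M" using s by simp
next
  assume s: "s \<in> carrier (UP R) \<and> s \<notin> polyI R M"
  then obtain i where i: "s i \<notin> M" unfolding polyI_def by auto
  have "s i \<noteq> \<zero>" using i additive_subgroup.zero_closed[OF ideal.axioms(1)[OF M_ideal]] by auto
  then have ideg: "i \<le> deg R s" using deg_above s by (metis not_le)
  have u: "s i \<in> Units R" using nonM_unit i s UP_closed by simp
  have sub: "{s i | i. i \<le> deg R s} \<subseteq> carrier R" using s UP_closed by auto
  have "s i \<in> Idl {s i | i. i \<le> deg R s}" using ideg genideal_self[OF sub] by blast
  then have "Idl {s i | i. i \<le> deg R s} = carrier R"
    using ideal_unit_carrier[OF genideal_ideal[OF sub] u] by simp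
  then show "s \<in> Sigma_set R" unfolding Sigma_set_def content_ideal_def using s by simp
qed

lemma locS_Sigma: "locS (UP R) (Sigma_set R)"
proof (rule locS.intro)
  show "cring (UP R)" by (rule U.UP_cring)
  show "locS_axioms (UP R) (Sigma_set R)"
  proof (rule locS_axioms.intro)
    show "Sigma_set R \<subseteq> carrier (UP R)" using Sigma_iff by auto
    have "\<one>\<^bsub>UP R\<^esub> 0 \<notin> M" using one_coeff one_notin_M by simp
    then show "\<one>\<^bsub>UP R\<^esub> \<in> Sigma_set R" using Sigma_iff U.one_closed polyI_coeff by blast
    fix s t assume "s \<in> Sigma_set R" "t \<in> Sigma_set R"
    then show "s \<otimes>\<^bsub>UP R\<^esub> t \<in> Sigma_set R" using Sigma_iff primeideal.I_prime[OF prime_polyI[OF M_prime]]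
      U.m_closed by blast
  qed
qed

lemma elim_aux:
  fixes n :: nat
  assumes J: "ideal J R"
  shows "\<lbrakk>\<forall>q\<le>n. \<forall>i\<le>n. c q i \<in> carrier R; \<forall>i\<le>n. x i \<in> carrier R; \<forall>q\<le>n. c q q \<in> Units R;
          \<forall>q i. q < i \<and> i \<le> n \<longrightarrow> c q i \<in> M; \<forall>q\<le>n. (\<Oplus>i \<in> {..n}. c q i \<otimes> x i) \<in> J\<rbrakk>
         \<Longrightarrow> \<forall>i\<le>n. x i \<in> J"
proof (induction n arbitrary: c)
  case 0
  have "(\<Oplus>i \<in> {..0::nat}. c 0 i \<otimes> x i) = c 0 0 \<otimes> x 0"
    by (rule finsum_0) (use 0 in auto)
  moreover have "(\<Oplus>i \<in> {..0::nat}. c 0 i \<otimes> x i) \<in> J" using 0(5) by blast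
  ultimately have "c 0 0 \<otimes> x 0 \<in> J" by simp
  moreover have "c 0 0 \<in> Units R" "x 0 \<in> carrier R" using 0(2,3) by auto
  ultimately have "x 0 \<in> J" using ideal_unit_cancel[OF J] by blast
  then show ?case by simp
next
  case (Suc n)
  define N where "N = Suc n"
  have cc: "\<And>q i. q \<le> N \<Longrightarrow> i \<le> N \<Longrightarrow> c q i \<in> carrier R" using Suc.prems(1) N_def by auto
  have xc: "\<And>i. i \<le> N \<Longrightarrow> x i \<in> carrier R" using Suc.prems(2) N_def by auto
  have uN: "c N N \<in> Units R" using Suc.prems(3) N_def by auto
  define d where "d = inv (c N N)"
  have dc: "d \<in> carrier R" "d \<otimes> c N N = \<one>" using uN d_def by auto
  define c' where "c' = (\<lambda>q i. c q i \<ominus> (c q N \<otimes> d) \<otimes> c N i)"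
  have c'c: "\<And>q i. q \<le> N \<Longrightarrow> i \<le> N \<Longrightarrow> c' q i \<in> carrier R" unfolding c'_def using cc dc by auto
  have MN: "\<And>q. q < N \<Longrightarrow> c q N \<in> M" using Suc.prems(4) N_def by auto
  have Mi: "\<And>a b. a \<in> M \<Longrightarrow> b \<in> carrier R \<Longrightarrow> a \<otimes> b \<in> M" using ideal.I_r_closed[OF M_ideal] by blast
  define F where "F = (\<lambda>q. (\<Oplus>i \<in> {..N}. c q i \<otimes> x i))"
  define A where "A = (\<lambda>q. (\<Oplus>i \<in> {..n}. c q i \<otimes> x i))"
  have FJ: "\<And>q. q \<le> N \<Longrightarrow> F q \<in> J" using Suc.prems(5) F_def N_def by auto
  have Ac: "\<And>q. q \<le> N \<Longrightarrow> A q \<in> carrier R" unfolding A_def using cc xc N_def by (auto intro: finsum_closed)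
  have FA: "\<And>q. q \<le> N \<Longrightarrow> F q = c q N \<otimes> x N \<oplus> A q"
    unfolding F_def A_def N_def using cc xc N_def by (subst finsum_Suc) auto
  have rowJ: "\<forall>q\<le>n. (\<Oplus>i \<in> {..n}. c' q i \<otimes> x i) \<in> J"
  proof (intro allI impI)
    fix q assume q: "q \<le> n"
    then have qN: "q \<le> N" "q < N" using N_def by auto
    have e1: "(\<Oplus>i \<in> {..n}. c' q i \<otimes> x i) =
          (\<Oplus>i \<in> {..n}. c q i \<otimes> x i \<oplus> (\<ominus> (c q N \<otimes> d)) \<otimes> (c N i \<otimes> x i))"
    proof (rule finsum_cong')
      fix i assume i: "i \<in> {..n}"
      then have ic: "c q i \<in> carrier R" "c N i \<in> carrier R" "x i \<in> carrier R" "c q N \<in> carrier R"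
        using cc xc qN N_def by auto
      show "c' q i \<otimes> x i = c q i \<otimes> x i \<oplus> (\<ominus> (c q N \<otimes> d)) \<otimes> (c N i \<otimes> x i)"
        unfolding c'_def using ic dc by algebra
    next
      show "(\<lambda>i. c q i \<otimes> x i \<oplus> (\<ominus> (c q N \<otimes> d)) \<otimes> (c N i \<otimes> x i)) \<in> {..n} \<rightarrow> carrier R"
        using cc xc dc qN N_def by auto
    qed simp
    also have "\<dots> = A q \<oplus> (\<Oplus>i \<in> {..n}. (\<ominus> (c q N \<otimes> d)) \<otimes> (c N i \<otimes> x i))"
      unfolding A_def by (rule finsum_addf) (use cc xc dc qN N_def in auto)
    also have "(\<Oplus>i \<in> {..n}. (\<ominus> (c q N \<otimes> d)) \<otimes> (c N i \<otimes> x i)) = (\<ominus> (c q N \<otimes> d)) \<otimes> A N"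
      unfolding A_def by (rule finsum_rdistr[symmetric]) (use cc xc dc qN N_def in auto)
    finally have e2: "(\<Oplus>i \<in> {..n}. c' q i \<otimes> x i) = A q \<oplus> (\<ominus> (c q N \<otimes> d)) \<otimes> A N" .
    have alg: "\<And>a b k x' y' e. \<lbrakk>a \<in> carrier R; b \<in> carrier R; k \<in> carrier R; x' \<in> carrier R; y' \<in> carrier R; e \<in> carrier R\<rbrakk> \<Longrightarrow>
        (k \<otimes> x' \<oplus> a) \<ominus> (k \<otimes> e) \<otimes> (y' \<otimes> x' \<oplus> b) = a \<oplus> (\<ominus> (k \<otimes> e)) \<otimes> b \<oplus> (k \<otimes> x' \<ominus> k \<otimes> x' \<otimes> (e \<otimes> y'))"
      by algebra
    have "F q \<ominus> (c q N \<otimes> d) \<otimes> F N = A q \<oplus> (\<ominus> (c q N \<otimes> d)) \<otimes> A N \<oplus> (c q N \<otimes> x N \<ominus> c q N \<otimes> x N \<otimes> (d \<otimes> c N N))"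
      unfolding FA[OF qN(1)] FA[OF order_refl] by (rule alg) (use Ac cc xc dc qN in auto)
    also have "\<dots> = A q \<oplus> (\<ominus> (c q N \<otimes> d)) \<otimes> A N" using dc Ac cc xc qN by simp
    finally have e3: "F q \<ominus> (c q N \<otimes> d) \<otimes> F N = (\<Oplus>i \<in> {..n}. c' q i \<otimes> x i)" using e2 by simp
    have "(c q N \<otimes> d) \<otimes> F N \<in> J" by (rule ideal.I_l_closed[OF J FJ[OF order_refl]]) (use cc dc qN in auto)
    then have "F q \<ominus> (c q N \<otimes> d) \<otimes> F N \<in> J" by (rule ideal_minus_closed[OF J FJ[OF qN(1)]])
    then show "(\<Oplus>i \<in> {..n}. c' q i \<otimes> x i) \<in> J" using e3 by simp
  qed
  have diag: "\<forall>q\<le>n. c' q q \<in> Units R"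
  proof (intro allI impI)
    fix q assume q: "q \<le> n"
    then have "c q N \<otimes> d \<otimes> c N q \<in> M" using MN[of q] N_def Mi cc dc by (simp add: m_assoc)
    moreover have "c q q \<in> Units R" using Suc.prems(3) q by auto
    ultimately show "c' q q \<in> Units R" unfolding c'_def using unit_minus_M by blast
  qed
  have upper: "\<forall>q i. q < i \<and> i \<le> n \<longrightarrow> c' q i \<in> M"
  proof (intro allI impI)
    fix q i assume qi: "q < i \<and> i \<le> n"
    then have "c q N \<otimes> d \<otimes> c N i \<in> M" using MN[of q] N_def Mi cc dc by (simp add: m_assoc)
    moreover have "c q i \<in> M" using Suc.prems(4) qi by auto
    ultimately show "c' q i \<in> M" unfolding c'_def using ideal_minus_closed[OF M_ideal] by blast
  qed
  have IH: "\<forall>i\<le>n. x i \<in> J"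
    using Suc.IH[of c'] c'c xc rowJ diag upper N_def by auto
  have AJ: "A N \<in> J" unfolding A_def
  proof (rule ideal_finsum[OF J])
    fix i assume "i \<in> {..n}"
    then show "c N i \<otimes> x i \<in> J" using IH ideal.I_l_closed[OF J] cc N_def by auto
  qed simp
  have "c N N \<otimes> x N = F N \<ominus> A N" using FA[OF order_refl] cc xc Ac by (simp add: minus_eq a_assoc r_neg)
  then have "c N N \<otimes> x N \<in> J" using ideal_minus_closed[OF J FJ[OF order_refl] AJ] by simp
  then have "x N \<in> J" using ideal_unit_cancel[OF J uN] xc by blast
  then show ?case using IH N_def le_Suc_eq by auto
qed

lemma finsum_extend:
  fixes a b :: nat
  assumes "\<And>i. g i \<in> carrier R" "\<And>i. a < i \<Longrightarrow> i \<le> b \<Longrightarrow> g i = \<zero>" "a \<le> b"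
  shows "(\<Oplus>i \<in> {..b}. g i) = (\<Oplus>i \<in> {..a}. g i)"
  using assms(3,2)
proof (induction b rule: dec_induct)
  case base then show ?case by simp
next
  case (step b)
  have "(\<Oplus>i \<in> {..Suc b}. g i) = g (Suc b) \<oplus> (\<Oplus>i \<in> {..b}. g i)"
    by (rule finsum_Suc) (use assms(1) in auto)
  also have "g (Suc b) = \<zero>" using step by auto
  also have "(\<Oplus>i \<in> {..b}. g i) = (\<Oplus>i \<in> {..a}. g i)" using step by auto
  finally show ?case using assms(1) by (simp add: finsum_closed)
qed

lemma KL:
  assumes J: "ideal J R" and t: "t \<in> Sigma_set R" and f: "f \<in> carrier (UP R)"
    and h: "\<And>N. (t \<otimes>\<^bsub>UP R\<^esub> f) N \<in> J"
  shows "f i \<in> J"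
proof -
  have tc: "t \<in> carrier (UP R)" "t \<notin> polyI R M" using t Sigma_iff by auto
  then have ex: "\<exists>j. t j \<notin> M" unfolding polyI_def by auto
  define j0 where "j0 = (LEAST j. t j \<notin> M)"
  have j0: "t j0 \<notin> M" "\<And>j. j < j0 \<Longrightarrow> t j \<in> M"
    unfolding j0_def using ex LeastI_ex not_less_Least by (metis, metis)
  define n where "n = deg R f"
  have z0: "\<zero> \<in> J" by (rule additive_subgroup.zero_closed[OF ideal.axioms(1)[OF J]])
  have zM: "\<zero> \<in> M" by (rule additive_subgroup.zero_closed[OF ideal.axioms(1)[OF M_ideal]])
  have fz: "\<And>i. n < i \<Longrightarrow> f i = \<zero>" using deg_above f n_def by auto
  define c where "c = (\<lambda>q i. if i \<le> j0 + q then t (j0 + q - i) else \<zero>)"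
  have cc: "\<And>q i. c q i \<in> carrier R" unfolding c_def using tc UP_closed by auto
  have fc: "\<And>i. f i \<in> carrier R" using f UP_closed by auto
  have tcc: "\<And>i. t i \<in> carrier R" using tc UP_closed by auto
  have ftc: "\<And>i j. f i \<otimes> t j \<in> carrier R" using fc tcc by (rule m_closed)
  have rows: "\<forall>q\<le>n. (\<Oplus>i \<in> {..n}. c q i \<otimes> f i) \<in> J"
  proof (intro allI impI)
    fix q assume q: "q \<le> n"
    define N where "N = j0 + q"
    define g where "g = (\<lambda>i. if i \<le> N then f i \<otimes> t (N - i) else \<zero>)"
    have gc: "\<And>i. g i \<in> carrier R" unfolding g_def using fc tcc by auto
    have "(f \<otimes>\<^bsub>UP R\<^esub> t) N = (\<Oplus>i \<in> {..N}. f i \<otimes> t (N - i))" using mult_coeff f tc by simp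
    also have "\<dots> = (\<Oplus>i \<in> {..N}. g i)"
      by (rule finsum_cong') (auto simp: g_def ftc)
    also have "\<dots> = (\<Oplus>i \<in> {..N + n}. g i)"
      by (rule finsum_extend[symmetric]) (auto simp: g_def ftc)
    finally have e1: "(f \<otimes>\<^bsub>UP R\<^esub> t) N = (\<Oplus>i \<in> {..N + n}. g i)" .
    have "(\<Oplus>i \<in> {..n}. c q i \<otimes> f i) = (\<Oplus>i \<in> {..n}. g i)"
      by (rule finsum_cong') (auto simp: g_def c_def N_def fc tcc m_comm)
    also have "\<dots> = (\<Oplus>i \<in> {..N + n}. g i)"
      by (rule finsum_extend[symmetric]) (auto simp: g_def fz fc tcc ftc)
    finally have e2: "(\<Oplus>i \<in> {..n}. c q i \<otimes> f i) = (f \<otimes>\<^bsub>UP R\<^esub> t) N" using e1 by simp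
    have "f \<otimes>\<^bsub>UP R\<^esub> t = t \<otimes>\<^bsub>UP R\<^esub> f" using f tc U.m_comm by blast
    then show "(\<Oplus>i \<in> {..n}. c q i \<otimes> f i) \<in> J" using e2 h by simp
  qed
  have diag: "\<forall>q\<le>n. c q q \<in> Units R" unfolding c_def using j0 nonM_unit tcc by simp
  have upper: "\<forall>q i. q < i \<and> i \<le> n \<longrightarrow> c q i \<in> M"
    unfolding c_def using j0(2) zM by auto
  have all: "\<forall>i\<le>n. f i \<in> J"
    by (rule elim_aux[OF J]) (use cc fc rows diag upper in auto)
  show ?thesis
  proof (cases "i \<le> n")
    case True then show ?thesis using all by simp
  next
    case False then show ?thesis using fz z0 by simp
  qed
qed

lemma up_decomp: assumes "p \<in> carrier (UP R)"
  shows "p = (\<Oplus>\<^bsub>UP R\<^esub> i \<in> {..deg R p}. up_ring.monom (UP R) (p i) 0 \<otimes>\<^bsub>UP R\<^esub> up_ring.monom (UP R) \<one> i)"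
proof -
  have "p = (\<Oplus>\<^bsub>UP R\<^esub> i \<in> {..deg R p}. up_ring.monom (UP R) (up_ring.coeff (UP R) p i) i)"
    using U.up_repr[OF assms] by simp
  also have "\<dots> = (\<Oplus>\<^bsub>UP R\<^esub> i \<in> {..deg R p}. up_ring.monom (UP R) (p i) 0 \<otimes>\<^bsub>UP R\<^esub> up_ring.monom (UP R) \<one> i)"
  proof (rule U.finsum_cong')
    fix i assume "i \<in> {..deg R p}"
    have pc: "p i \<in> carrier R" using assms UP_closed by auto
    show "up_ring.monom (UP R) (up_ring.coeff (UP R) p i) i = up_ring.monom (UP R) (p i) 0 \<otimes>\<^bsub>UP R\<^esub> up_ring.monom (UP R) \<one> i"
      using U.monom_mult[OF pc one_closed, of 0 i] coeff_UP[OF assms] pc by simp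
  qed (use assms UP_closed in auto)
  finally show ?thesis .
qed

end



sublocale nag \<subseteq> X: locS "UP R" "Sigma_set R" by (rule locS_Sigma)

sublocale nag \<subseteq> Z: cring "localization (UP R) (Sigma_set R)" by (rule X.cring_L)

context nag
begin

abbreviation "RX \<equiv> localization (UP R) (Sigma_set R)"
abbreviation "frx \<equiv> loc_frac (UP R) (Sigma_set R)"
abbreviation "nc \<equiv> nagata_const R"
abbreviation "Mx \<equiv> loc_ext (UP R) (Sigma_set R) (polyI R M)"

lemma RX_cring: "cring RX" by (rule X.cring_L)

lemma nc_def': "nc a = frx (up_ring.monom (UP R) a 0) \<one>\<^bsub>UP R\<^esub>"
  unfolding nagata_const_def nagata_map_def loc_map_def by simp

lemma nagata_eq: "nagata R = RX" unfolding nagata_def by simp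
lemma nagata_map_eq: "nagata_map R q = frx q \<one>\<^bsub>UP R\<^esub>" unfolding nagata_map_def loc_map_def by simp

lemma monom_closed': "a \<in> carrier R \<Longrightarrow> up_ring.monom (UP R) a n \<in> carrier (UP R)"
  by (rule U.monom_closed)

lemma nc_closed: "a \<in> carrier R \<Longrightarrow> nc a \<in> carrier RX"
  unfolding nc_def' by (rule X.frac_in_L) (auto intro: monom_closed' X.one_S)

lemma nc_mult: "\<lbrakk>a \<in> carrier R; b \<in> carrier R\<rbrakk> \<Longrightarrow> nc (a \<otimes> b) = nc a \<otimes>\<^bsub>RX\<^esub> nc b"
proof -
  assume ab: "a \<in> carrier R" "b \<in> carrier R"
  have "up_ring.monom (UP R) (a \<otimes> b) (0 + 0) = up_ring.monom (UP R) a 0 \<otimes>\<^bsub>UP R\<^esub> up_ring.monom (UP R) b 0"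
    by (rule U.monom_mult[OF ab])
  then show ?thesis unfolding nc_def' using ab X.one_S
    by (simp add: X.mult_frac monom_closed')
qed

lemma Sigma_unit_coeff: assumes "u \<in> Sigma_set R" obtains j where "u j \<in> Units R"
proof -
  have "u \<in> carrier (UP R)" "u \<notin> polyI R M" using assms Sigma_iff by auto
  then obtain j where "u j \<notin> M" unfolding polyI_def by auto
  then have "u j \<in> Units R" using nonM_unit UP_closed \<open>u \<in> carrier (UP R)\<close> by simp
  then show ?thesis using that by blast
qed

lemma smult_monom_comm: "\<lbrakk>a \<in> carrier R; u \<in> carrier (UP R)\<rbrakk> \<Longrightarrow>
   (u \<otimes>\<^bsub>UP R\<^esub> up_ring.monom (UP R) a 0) j = a \<otimes> u j"
proof -
  assume h: "a \<in> carrier R" "u \<in> carrier (UP R)"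
  have "u \<otimes>\<^bsub>UP R\<^esub> up_ring.monom (UP R) a 0 = up_ring.monom (UP R) a 0 \<otimes>\<^bsub>UP R\<^esub> u"
    using h monom_closed' U.m_comm by blast
  also have "\<dots> = a \<odot>\<^bsub>UP R\<^esub> u" by (rule U.monom_mult_is_smult[OF h])
  finally show ?thesis using smult_coeff h by simp
qed

lemma K1: assumes J: "ideal J R" and a: "a \<in> carrier R" and m: "nc a \<in> loc_ext (UP R) (Sigma_set R) (polyI R J)"
  shows "a \<in> J"
proof -
  have "\<exists>u\<in>Sigma_set R. u \<otimes>\<^bsub>UP R\<^esub> up_ring.monom (UP R) a 0 \<in> polyI R J"
    by (rule X.ext_memD[OF ideal_polyI[OF J]]) (use m a monom_closed' X.one_S in \<open>auto simp: nc_def'\<close>)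
  then obtain u where u: "u \<in> Sigma_set R" "u \<otimes>\<^bsub>UP R\<^esub> up_ring.monom (UP R) a 0 \<in> polyI R J" by blast
  obtain j where j: "u j \<in> Units R" using Sigma_unit_coeff[OF u(1)] by blast
  have uc: "u \<in> carrier (UP R)" using u Sigma_iff by auto
  have "(u \<otimes>\<^bsub>UP R\<^esub> up_ring.monom (UP R) a 0) j \<in> J" using u(2) polyI_coeff by blast
  then have "a \<otimes> u j \<in> J" using smult_monom_comm[OF a uc] by simp
  then have "u j \<otimes> a \<in> J" using m_comm a UP_closed[OF uc] by simp
  then show ?thesis using ideal_unit_cancel[OF J j a] by simp
qed

lemma K2: assumes J: "ideal J R" and b: "b \<in> J"
  shows "nc b \<in> loc_ext (UP R) (Sigma_set R) (polyI R J)"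
proof -
  have bc: "b \<in> carrier R" using ideal.Icarr[OF J b] .
  have "up_ring.monom (UP R) b 0 \<in> polyI R J"
    unfolding polyI_def using monom_closed'[OF bc] monom_coeff[OF bc] b
      additive_subgroup.zero_closed[OF ideal.axioms(1)[OF J]] by auto
  then show ?thesis unfolding nc_def' loc_ext_def using X.one_S by blast
qed

lemma Mx_ideal: "ideal Mx RX" by (rule X.ideal_ext[OF ideal_polyI[OF M_ideal]])

lemma one_notin_Mx: "\<one>\<^bsub>RX\<^esub> \<notin> Mx"
proof
  assume "\<one>\<^bsub>RX\<^esub> \<in> Mx"
  then have "frx \<one>\<^bsub>UP R\<^esub> \<one>\<^bsub>UP R\<^esub> \<in> Mx" by (simp add: X.one_L)
  then obtain u where u: "u \<in> Sigma_set R" "u \<otimes>\<^bsub>UP R\<^esub> \<one>\<^bsub>UP R\<^esub> \<in> polyI R M"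
    using X.ext_memD[OF ideal_polyI[OF M_ideal]] X.one_S U.one_closed by blast
  then have "u \<in> polyI R M" using Sigma_iff by simp
  then show False using u(1) Sigma_iff by simp
qed

lemma nonMx_unit: assumes "x \<in> carrier RX" "x \<notin> Mx" shows "x \<in> Units RX"
proof -
  obtain f s where fs: "x = frx f s" "f \<in> carrier (UP R)" "s \<in> Sigma_set R" using assms(1) by (rule X.carrier_LE)
  have "f \<notin> polyI R M" using fs assms(2) unfolding loc_ext_def by blast
  then have "f \<in> Sigma_set R" using Sigma_iff fs by simp
  then show ?thesis using X.frac_unit fs by simp
qed

lemma aM_ideal: assumes "a \<in> carrier R" shows "ideal {a \<otimes> r | r. r \<in> M} R"
proof (rule idealI_simple)
  show "{a \<otimes> r | r. r \<in> M} \<subseteq> carrier R" using assms M_carr by auto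
  have "\<zero> \<in> M" by (rule additive_subgroup.zero_closed[OF ideal.axioms(1)[OF M_ideal]])
  moreover have "a \<otimes> \<zero> = \<zero>" using assms by simp
  ultimately show "\<zero> \<in> {a \<otimes> r | r. r \<in> M}" by (metis (mono_tags, lifting) mem_Collect_eq)
next
  fix x y assume "x \<in> {a \<otimes> r | r. r \<in> M}" "y \<in> {a \<otimes> r | r. r \<in> M}"
  then obtain r1 r2 where r: "x = a \<otimes> r1" "y = a \<otimes> r2" "r1 \<in> M" "r2 \<in> M" by blast
  have "r1 \<oplus> r2 \<in> M" by (rule additive_subgroup.a_closed[OF ideal.axioms(1)[OF M_ideal] r(3,4)])
  moreover have "r1 \<in> carrier R" "r2 \<in> carrier R" using M_carr r by auto
  then have "x \<oplus> y = a \<otimes> (r1 \<oplus> r2)" using r assms by (simp add: r_distr)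
  ultimately show "x \<oplus> y \<in> {a \<otimes> r | r. r \<in> M}" by blast
next
  fix x y assume "x \<in> {a \<otimes> r | r. r \<in> M}" "y \<in> carrier R"
  then obtain r1 where r: "x = a \<otimes> r1" "r1 \<in> M" by blast
  have "y \<otimes> r1 \<in> M" by (rule ideal.I_l_closed[OF M_ideal r(2) \<open>y \<in> carrier R\<close>])
  moreover have "y \<otimes> x = a \<otimes> (y \<otimes> r1)" using r assms M_carr \<open>y \<in> carrier R\<close> by (auto simp: m_lcomm)
  ultimately show "y \<otimes> x \<in> {a \<otimes> r | r. r \<in> M}" by blast
qed

end

locale nagp = nag R M for R (structure) and M +
  fixes p
  assumes p_carr: "p \<in> carrier (UP R)"
    and sd: "strong_divisor (nagata R) (nagata_map R p)"
begin

abbreviation "P \<equiv> frx p \<one>\<^bsub>UP R\<^esub>"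
abbreviation "I \<equiv> content_ideal R p"

lemma P_eq: "nagata_map R p = P" by (rule nagata_map_eq)

lemma P_carr: "P \<in> carrier RX" by (rule X.frac_in_L[OF p_carr X.one_S])

lemma P_reg: "\<And>x. x \<in> carrier RX \<Longrightarrow> P \<otimes>\<^bsub>RX\<^esub> x = \<zero>\<^bsub>RX\<^esub> \<Longrightarrow> x = \<zero>\<^bsub>RX\<^esub>"
  using sd unfolding strong_divisor_def regular_elem_def nagata_eq P_eq by blast

lemma P_cmp: "ideal J RX \<Longrightarrow> PIdl\<^bsub>RX\<^esub> P \<subseteq> J \<or> J \<subseteq> PIdl\<^bsub>RX\<^esub> P"
  using sd unfolding strong_divisor_def nagata_eq P_eq by blast

lemma pc: "p i \<in> carrier R" using UP_closed[OF p_carr] .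

lemma I_def': "I = Idl {p i | i. i \<le> deg R p}" unfolding content_ideal_def by simp
lemma gens_sub: "{p i | i. i \<le> deg R p} \<subseteq> carrier R" using pc by auto
lemma I_ideal: "ideal I R" unfolding I_def' by (rule genideal_ideal[OF gens_sub])
lemma pI: "i \<le> deg R p \<Longrightarrow> p i \<in> I" unfolding I_def' using genideal_self[OF gens_sub] by blast

lemma one_ne_zero_RX: "\<one>\<^bsub>RX\<^esub> \<noteq> \<zero>\<^bsub>RX\<^esub>"
proof
  assume "\<one>\<^bsub>RX\<^esub> = \<zero>\<^bsub>RX\<^esub>"
  then have "frx \<one>\<^bsub>UP R\<^esub> \<one>\<^bsub>UP R\<^esub> = \<zero>\<^bsub>RX\<^esub>" by (simp add: X.one_L)
  then obtain u where u: "u \<in> Sigma_set R" "u \<otimes>\<^bsub>UP R\<^esub> \<one>\<^bsub>UP R\<^esub> = \<zero>\<^bsub>UP R\<^esub>"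
    using X.frac_zero_iff U.one_closed X.one_S by blast
  then have "u = \<zero>\<^bsub>UP R\<^esub>" using Sigma_iff by simp
  moreover have "\<zero>\<^bsub>UP R\<^esub> \<in> polyI R M"
    using ideal_polyI[OF M_ideal] additive_subgroup.zero_closed ideal.axioms(1) by metis
  ultimately show False using u(1) Sigma_iff by simp
qed

lemma P_nonzero: "P \<noteq> \<zero>\<^bsub>RX\<^esub>"
proof
  assume "P = \<zero>\<^bsub>RX\<^esub>"
  then have "P \<otimes>\<^bsub>RX\<^esub> \<one>\<^bsub>RX\<^esub> = \<zero>\<^bsub>RX\<^esub>" using cring.cring_simprules(26)[OF RX_cring] cring.cring_simprules(6)[OF RX_cring]
    by (metis)
  then have "\<one>\<^bsub>RX\<^esub> = \<zero>\<^bsub>RX\<^esub>" using P_reg monoid.one_closed[OF cring.axioms(1)[OF RX_cring, THEN ring.is_monoid]] by blast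
  then show False using one_ne_zero_RX by simp
qed

lemma step2:
  assumes k: "k \<le> deg R p" and m: "P \<in> PIdl\<^bsub>RX\<^esub> (nc (p k))"
  shows "I = PIdl (p k) \<and> (\<exists>w\<in>Units RX. P = w \<otimes>\<^bsub>RX\<^esub> nc (p k))"
proof -
  define a where "a = p k"
  have ac: "a \<in> carrier R" using pc a_def by simp
  define A where "A = up_ring.monom (UP R) a 0"
  have Ac: "A \<in> carrier (UP R)" unfolding A_def using monom_closed'[OF ac] .
  obtain y where y: "y \<in> carrier RX" "P = y \<otimes>\<^bsub>RX\<^esub> nc a" using m unfolding cgenideal_def a_def by blast
  obtain g s where gs: "y = frx g s" "g \<in> carrier (UP R)" "s \<in> Sigma_set R" using y(1) by (rule X.carrier_LE)
  have sc: "s \<in> carrier (UP R)" using gs X.SB by simp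
  have "y \<otimes>\<^bsub>RX\<^esub> nc a = frx (g \<otimes>\<^bsub>UP R\<^esub> A) (s \<otimes>\<^bsub>UP R\<^esub> \<one>\<^bsub>UP R\<^esub>)"
    unfolding gs nc_def' A_def[symmetric] by (rule X.mult_frac) (use gs Ac X.one_S in auto)
  also have "s \<otimes>\<^bsub>UP R\<^esub> \<one>\<^bsub>UP R\<^esub> = s" using sc by simp
  finally have "frx p \<one>\<^bsub>UP R\<^esub> = frx (g \<otimes>\<^bsub>UP R\<^esub> A) s" using y(2) by simp
  then obtain u where u: "u \<in> Sigma_set R"
    "u \<otimes>\<^bsub>UP R\<^esub> ((p \<otimes>\<^bsub>UP R\<^esub> s) \<ominus>\<^bsub>UP R\<^esub> ((g \<otimes>\<^bsub>UP R\<^esub> A) \<otimes>\<^bsub>UP R\<^esub> \<one>\<^bsub>UP R\<^esub>)) = \<zero>\<^bsub>UP R\<^esub>"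
    using X.frac_eq[of p "\<one>\<^bsub>UP R\<^esub>" "g \<otimes>\<^bsub>UP R\<^esub> A" s] p_carr X.one_S gs Ac by auto
  have uc: "u \<in> carrier (UP R)" using u X.SB by simp
  define t where "t = u \<otimes>\<^bsub>UP R\<^esub> s"
  define h where "h = u \<otimes>\<^bsub>UP R\<^esub> g"
  have tS: "t \<in> Sigma_set R" unfolding t_def using X.mult_S u gs by simp
  have tc: "t \<in> carrier (UP R)" "h \<in> carrier (UP R)" unfolding t_def h_def using uc sc gs by auto
  have alg: "\<And>u s g A p. \<lbrakk>u \<in> carrier (UP R); s \<in> carrier (UP R); g \<in> carrier (UP R); A \<in> carrier (UP R); p \<in> carrier (UP R)\<rbrakk> \<Longrightarrow>
      (u \<otimes>\<^bsub>UP R\<^esub> s) \<otimes>\<^bsub>UP R\<^esub> p = u \<otimes>\<^bsub>UP R\<^esub> ((p \<otimes>\<^bsub>UP R\<^esub> s) \<ominus>\<^bsub>UP R\<^esub> ((g \<otimes>\<^bsub>UP R\<^esub> A) \<otimes>\<^bsub>UP R\<^esub> \<one>\<^bsub>UP R\<^esub>))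
          \<oplus>\<^bsub>UP R\<^esub> (A \<otimes>\<^bsub>UP R\<^esub> (u \<otimes>\<^bsub>UP R\<^esub> g))"
    apply algebra
    apply (simp add: U.r_neg U.m_closed)
    done
  have u2: "u \<otimes>\<^bsub>UP R\<^esub> ((p \<otimes>\<^bsub>UP R\<^esub> s) \<ominus>\<^bsub>UP R\<^esub> (g \<otimes>\<^bsub>UP R\<^esub> A)) = \<zero>\<^bsub>UP R\<^esub>"
    using u(2) by (simp only: U.r_one[OF U.m_closed[OF gs(2) Ac]])
  have tp: "t \<otimes>\<^bsub>UP R\<^esub> p = A \<otimes>\<^bsub>UP R\<^esub> h"
    unfolding t_def h_def using alg[OF uc sc gs(2) Ac p_carr] u2 Ac uc gs(2) by simp
  have coef: "\<And>N. (t \<otimes>\<^bsub>UP R\<^esub> p) N = a \<otimes> h N"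
  proof -
    fix N
    have "A \<otimes>\<^bsub>UP R\<^esub> h = h \<otimes>\<^bsub>UP R\<^esub> A" using Ac tc U.m_comm by blast
    then show "(t \<otimes>\<^bsub>UP R\<^esub> p) N = a \<otimes> h N" using tp smult_monom_comm[OF ac tc(2)] A_def by simp
  qed
  have hc: "\<And>N. h N \<in> carrier R" using UP_closed tc by simp
  have allp: "\<And>i. p i \<in> PIdl a"
  proof (rule KL[OF cgenideal_ideal[OF ac] tS p_carr])
    fix N show "(t \<otimes>\<^bsub>UP R\<^esub> p) N \<in> PIdl a" unfolding coef cgenideal_def using hc ac m_comm by blast
  qed
  have IeqP: "I = PIdl a"
  proof
    show "I \<subseteq> PIdl a" unfolding I_def' by (rule genideal_minimal[OF cgenideal_ideal[OF ac]]) (use allp in blast)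
    show "PIdl a \<subseteq> I" by (rule cgenideal_minimal[OF I_ideal]) (use pI[OF k] a_def in simp)
  qed
  have "g \<in> Sigma_set R"
  proof (rule ccontr)
    assume "g \<notin> Sigma_set R"
    then have gM: "g \<in> polyI R M" using Sigma_iff gs by simp
    have hM: "h \<in> polyI R M" unfolding h_def by (rule ideal.I_l_closed[OF ideal_polyI[OF M_ideal] gM uc])
    have "p k \<in> {a \<otimes> r | r. r \<in> M}"
    proof (rule KL[OF aM_ideal[OF ac] tS p_carr])
      fix N show "(t \<otimes>\<^bsub>UP R\<^esub> p) N \<in> {a \<otimes> r | r. r \<in> M}" unfolding coef using hM polyI_coeff by blast
    qed
    then obtain r where r: "a = a \<otimes> r" "r \<in> M" using a_def by blast
    have rc: "r \<in> carrier R" using r M_carr by auto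
    have "a \<otimes> (\<one> \<ominus> r) = a \<ominus> a \<otimes> r" using ac rc by algebra
    also have "\<dots> = \<zero>" using r(1)[symmetric] ac by simp
    finally have e0: "a \<otimes> (\<one> \<ominus> r) = \<zero>" .
    have un: "\<one> \<ominus> r \<in> Units R" using unit_minus_M[OF _ r(2)] by simp
    have "(\<one> \<ominus> r) \<otimes> a \<in> {\<zero>}" using e0 m_comm ac rc by simp
    then have a0: "a = \<zero>" using ideal_unit_cancel[OF zeroideal un ac] by simp
    have "\<And>i. p i = \<zero>"
    proof -
      fix i show "p i = \<zero>"
      proof (cases "i \<le> deg R p")
        case True
        then have "p i \<in> PIdl a" using pI IeqP by simp
        then show ?thesis unfolding a0 cgenideal_def by auto
      next
        case False then show ?thesis using deg_above p_carr by simp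
      qed
    qed
    then have "p = \<zero>\<^bsub>UP R\<^esub>" using zero_coeff by (intro ext) simp
    then have "P = \<zero>\<^bsub>RX\<^esub>" by (simp add: X.zero_L)
    then show False using P_nonzero by simp
  qed
  then have "y \<in> Units RX" using gs X.frac_unit by simp
  then show ?thesis using IeqP y a_def by blast
qed

lemma P_decomp:
  "P = (\<Oplus>\<^bsub>RX\<^esub> i \<in> {..deg R p}. nc (p i) \<otimes>\<^bsub>RX\<^esub> frx (up_ring.monom (UP R) \<one> i) \<one>\<^bsub>UP R\<^esub>)"
proof -
  have rhr: "ring_hom_ring (UP R) RX (loc_map (UP R) (Sigma_set R))"
    by (rule ring_hom_ringI2[OF cring.axioms(1)[OF U.UP_cring] Z.ring_axioms X.hom_L])
  define F where "F = (\<lambda>i. up_ring.monom (UP R) (p i) 0 \<otimes>\<^bsub>UP R\<^esub> up_ring.monom (UP R) \<one> i)"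
  have Fc: "F \<in> {..deg R p} \<rightarrow> carrier (UP R)" unfolding F_def using pc monom_closed' by auto
  have "P = loc_map (UP R) (Sigma_set R) p" by (simp add: X.loc_map_frac)
  also have "\<dots> = loc_map (UP R) (Sigma_set R) (\<Oplus>\<^bsub>UP R\<^esub> i \<in> {..deg R p}. F i)"
    unfolding F_def using up_decomp[OF p_carr] by simp
  also have "\<dots> = (\<Oplus>\<^bsub>RX\<^esub> i \<in> {..deg R p}. (loc_map (UP R) (Sigma_set R) \<circ> F) i)"
    by (rule ring_hom_ring.hom_finsum[OF rhr Fc])
  also have "\<dots> = (\<Oplus>\<^bsub>RX\<^esub> i \<in> {..deg R p}. nc (p i) \<otimes>\<^bsub>RX\<^esub> frx (up_ring.monom (UP R) \<one> i) \<one>\<^bsub>UP R\<^esub>)"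
  proof (rule Z.finsum_cong')
    fix i assume "i \<in> {..deg R p}"
    have "loc_map (UP R) (Sigma_set R) (F i) = loc_map (UP R) (Sigma_set R) (up_ring.monom (UP R) (p i) 0) \<otimes>\<^bsub>RX\<^esub>
       loc_map (UP R) (Sigma_set R) (up_ring.monom (UP R) \<one> i)"
      unfolding F_def by (rule ring_hom_mult[OF X.hom_L]) (use pc monom_closed' in auto)
    then show "(loc_map (UP R) (Sigma_set R) \<circ> F) i = nc (p i) \<otimes>\<^bsub>RX\<^esub> frx (up_ring.monom (UP R) \<one> i) \<one>\<^bsub>UP R\<^esub>"
      by (simp add: X.loc_map_frac nc_def')
  next
    show "(\<lambda>i. nc (p i) \<otimes>\<^bsub>RX\<^esub> frx (up_ring.monom (UP R) \<one> i) \<one>\<^bsub>UP R\<^esub>) \<in> {..deg R p} \<rightarrow> carrier RX"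
      using nc_closed pc X.frac_in_L monom_closed' X.one_S by auto
  qed simp
  finally show ?thesis .
qed

lemma step1: "\<exists>k \<le> deg R p. P \<in> PIdl\<^bsub>RX\<^esub> (nc (p k))"
proof (rule ccontr)
  assume neg: "\<not> (\<exists>k \<le> deg R p. P \<in> PIdl\<^bsub>RX\<^esub> (nc (p k)))"
  define d where "d = deg R p"
  define x where "x = (\<lambda>i. frx (up_ring.monom (UP R) \<one> i) \<one>\<^bsub>UP R\<^esub>)"
  have xc: "\<And>i. x i \<in> carrier RX" unfolding x_def using X.frac_in_L monom_closed' X.one_S by auto
  have ncc: "\<And>i. nc (p i) \<in> carrier RX" using nc_closed pc by auto
  have PP: "P \<in> PIdl\<^bsub>RX\<^esub> P" by (rule Z.cgenideal_self[OF P_carr])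
  have "\<forall>i\<in>{..d}. \<exists>v. v \<in> carrier RX \<and> nc (p i) = v \<otimes>\<^bsub>RX\<^esub> P"
  proof
    fix i assume i: "i \<in> {..d}"
    have "PIdl\<^bsub>RX\<^esub> P \<subseteq> PIdl\<^bsub>RX\<^esub> (nc (p i)) \<or> PIdl\<^bsub>RX\<^esub> (nc (p i)) \<subseteq> PIdl\<^bsub>RX\<^esub> P"
      by (rule P_cmp[OF Z.cgenideal_ideal[OF ncc]])
    moreover have "\<not> PIdl\<^bsub>RX\<^esub> P \<subseteq> PIdl\<^bsub>RX\<^esub> (nc (p i))" using neg PP i d_def by auto
    ultimately have "nc (p i) \<in> PIdl\<^bsub>RX\<^esub> P" using Z.cgenideal_self[OF ncc] by blast
    then show "\<exists>v. v \<in> carrier RX \<and> nc (p i) = v \<otimes>\<^bsub>RX\<^esub> P" unfolding cgenideal_def by blast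
  qed
  from bchoice[OF this] obtain v where v0: "\<forall>i\<in>{..d}. v i \<in> carrier RX \<and> nc (p i) = v i \<otimes>\<^bsub>RX\<^esub> P"
    by blast
  have v: "\<And>i. i \<in> {..d} \<Longrightarrow> v i \<in> carrier RX \<and> nc (p i) = v i \<otimes>\<^bsub>RX\<^esub> P" using v0 by blast
  define S where "S = (\<Oplus>\<^bsub>RX\<^esub> i \<in> {..d}. v i \<otimes>\<^bsub>RX\<^esub> x i)"
  have Sc: "S \<in> carrier RX" unfolding S_def using v xc by (auto intro!: Z.finsum_closed)
  have "P = (\<Oplus>\<^bsub>RX\<^esub> i \<in> {..d}. nc (p i) \<otimes>\<^bsub>RX\<^esub> x i)" using P_decomp d_def x_def by simp
  also have "\<dots> = (\<Oplus>\<^bsub>RX\<^esub> i \<in> {..d}. (v i \<otimes>\<^bsub>RX\<^esub> x i) \<otimes>\<^bsub>RX\<^esub> P)"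
  proof (rule Z.finsum_cong')
    fix i assume i: "i \<in> {..d}"
    then show "nc (p i) \<otimes>\<^bsub>RX\<^esub> x i = (v i \<otimes>\<^bsub>RX\<^esub> x i) \<otimes>\<^bsub>RX\<^esub> P"
    proof -
      have vc: "v i \<in> carrier RX" and e: "nc (p i) = v i \<otimes>\<^bsub>RX\<^esub> P" using v[OF i] by auto
      have "(v i \<otimes>\<^bsub>RX\<^esub> P) \<otimes>\<^bsub>RX\<^esub> x i = (v i \<otimes>\<^bsub>RX\<^esub> x i) \<otimes>\<^bsub>RX\<^esub> P"
        using vc xc[of i] P_carr by algebra
      then show ?thesis using e by simp
    qed
  next
    show "(\<lambda>i. (v i \<otimes>\<^bsub>RX\<^esub> x i) \<otimes>\<^bsub>RX\<^esub> P) \<in> {..d} \<rightarrow> carrier RX" using v xc P_carr by auto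
  qed simp
  also have "\<dots> = S \<otimes>\<^bsub>RX\<^esub> P" unfolding S_def
    by (rule Z.finsum_ldistr[symmetric]) (use v xc P_carr in auto)
  finally have PS: "P = S \<otimes>\<^bsub>RX\<^esub> P" .
  have "P \<otimes>\<^bsub>RX\<^esub> (\<one>\<^bsub>RX\<^esub> \<ominus>\<^bsub>RX\<^esub> S) = P \<ominus>\<^bsub>RX\<^esub> S \<otimes>\<^bsub>RX\<^esub> P"
    using Sc P_carr by algebra
  also have "\<dots> = \<zero>\<^bsub>RX\<^esub>" using PS[symmetric] P_carr by simp
  finally have "\<one>\<^bsub>RX\<^esub> \<ominus>\<^bsub>RX\<^esub> S = \<zero>\<^bsub>RX\<^esub>" using P_reg Sc by simp
  moreover have "S = \<one>\<^bsub>RX\<^esub> \<ominus>\<^bsub>RX\<^esub> (\<one>\<^bsub>RX\<^esub> \<ominus>\<^bsub>RX\<^esub> S)" using Sc by algebra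
  ultimately have S1: "S = \<one>\<^bsub>RX\<^esub>" by simp
  show False
  proof (cases "\<forall>i\<in>{..d}. v i \<in> Mx")
    case True
    have "S \<in> Mx" unfolding S_def
    proof (rule Z.ideal_finsum[OF Mx_ideal])
      fix i assume i: "i \<in> {..d}"
      show "v i \<otimes>\<^bsub>RX\<^esub> x i \<in> Mx" by (rule ideal.I_r_closed[OF Mx_ideal]) (use True i xc in auto)
    qed simp
    then show False using S1 one_notin_Mx by simp
  next
    case False
    then obtain i where i: "i \<in> {..d}" "v i \<notin> Mx" by blast
    have u: "v i \<in> Units RX" using nonMx_unit v[OF i(1)] i(2) by blast
    have vc: "v i \<in> carrier RX" and e: "nc (p i) = v i \<otimes>\<^bsub>RX\<^esub> P" using v[OF i(1)] by auto
    have ivc: "inv\<^bsub>RX\<^esub> (v i) \<in> carrier RX" by (rule Z.Units_inv_closed[OF u])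
    have "inv\<^bsub>RX\<^esub> (v i) \<otimes>\<^bsub>RX\<^esub> (v i \<otimes>\<^bsub>RX\<^esub> P) = (inv\<^bsub>RX\<^esub> (v i) \<otimes>\<^bsub>RX\<^esub> v i) \<otimes>\<^bsub>RX\<^esub> P"
      by (rule Z.m_assoc[symmetric, OF ivc vc P_carr])
    also have "\<dots> = P" using Z.Units_l_inv[OF u] P_carr by simp
    finally have "inv\<^bsub>RX\<^esub> (v i) \<otimes>\<^bsub>RX\<^esub> nc (p i) = P" using e by simp
    then have "P \<in> PIdl\<^bsub>RX\<^esub> (nc (p i))" unfolding cgenideal_def using Z.Units_inv_closed[OF u] by blast
    then show False using neg i d_def by auto
  qed
qed

lemma nc_hom: "nc \<in> ring_hom R RX"
proof (rule ring_hom_memI)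
  fix x assume "x \<in> carrier R" then show "nc x \<in> carrier RX" by (rule nc_closed)
next
  fix x y assume "x \<in> carrier R" "y \<in> carrier R" then show "nc (x \<otimes> y) = nc x \<otimes>\<^bsub>RX\<^esub> nc y" by (rule nc_mult)
next
  fix x y assume xy: "x \<in> carrier R" "y \<in> carrier R"
  have "up_ring.monom (UP R) (x \<oplus> y) 0 = up_ring.monom (UP R) x 0 \<oplus>\<^bsub>UP R\<^esub> up_ring.monom (UP R) y 0"
    by (rule U.monom_add[OF xy])
  then show "nc (x \<oplus> y) = nc x \<oplus>\<^bsub>RX\<^esub> nc y" unfolding nc_def' using xy X.one_S monom_closed'
    by (simp add: X.add_frac)
next
  show "nc \<one> = \<one>\<^bsub>RX\<^esub>" unfolding nc_def' by (simp add: X.one_L)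
qed

lemma nc_zero: "nc \<zero> = \<zero>\<^bsub>RX\<^esub>" unfolding nc_def' by (simp add: X.zero_L)

abbreviation "Pw \<equiv> {P [^]\<^bsub>RX\<^esub> (n::nat) | n. True}"

lemma locS_Pw: "locS RX Pw"
proof (rule locS.intro)
  show "cring RX" by (rule RX_cring)
  show "locS_axioms RX Pw"
  proof (rule locS_axioms.intro)
    show "Pw \<subseteq> carrier RX" using P_carr by auto
    have "P [^]\<^bsub>RX\<^esub> (0::nat) = \<one>\<^bsub>RX\<^esub>" by simp
    then show "\<one>\<^bsub>RX\<^esub> \<in> Pw" by (metis (mono_tags, lifting) mem_Collect_eq)
    fix s t assume "s \<in> Pw" "t \<in> Pw"
    then obtain m n where "s = P [^]\<^bsub>RX\<^esub> (m::nat)" "t = P [^]\<^bsub>RX\<^esub> (n::nat)" by blast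
    then have "s \<otimes>\<^bsub>RX\<^esub> t = P [^]\<^bsub>RX\<^esub> (m + n)" using Z.nat_pow_mult[OF P_carr] by simp
    then show "s \<otimes>\<^bsub>RX\<^esub> t \<in> Pw" by blast
  qed
qed

lemma M_max_sub: assumes "ideal q R" "q \<noteq> carrier R" shows "q \<subseteq> M"
  using krull[OF assms] uniqM by blast

lemma spec_part:
  assumes w: "w \<in> Units RX" "P = w \<otimes>\<^bsub>RX\<^esub> nc \<rho>" and I\<rho>: "I = PIdl \<rho>" and \<rho>c: "\<rho> \<in> carrier R"
  shows "{ {a \<in> carrier R. loc_elem_map RX P (nc a) \<in> Q} | Q. Q \<in> Spec (loc_elem RX P) } = D_set R I"
proof -
  interpret Y: locS RX Pw by (rule locS_Pw)
  have YL: "loc_elem RX P = Y.L" unfolding loc_elem_def by simp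
  have Ymap: "loc_elem_map RX P = loc_map RX Pw" unfolding loc_elem_map_def by simp
  have wc: "w \<in> carrier RX" "inv\<^bsub>RX\<^esub> w \<in> carrier RX" using w(1) by auto
  have nc\<rho>: "nc \<rho> \<in> carrier RX" by (rule nc_closed[OF \<rho>c])
  have nc_P: "nc \<rho> = inv\<^bsub>RX\<^esub> w \<otimes>\<^bsub>RX\<^esub> P"
  proof -
    have "inv\<^bsub>RX\<^esub> w \<otimes>\<^bsub>RX\<^esub> (w \<otimes>\<^bsub>RX\<^esub> nc \<rho>) = (inv\<^bsub>RX\<^esub> w \<otimes>\<^bsub>RX\<^esub> w) \<otimes>\<^bsub>RX\<^esub> nc \<rho>"
      by (rule Z.m_assoc[symmetric, OF wc(2) wc(1) nc\<rho>])
    also have "\<dots> = nc \<rho>" using Z.Units_l_inv[OF w(1)] nc\<rho> by simp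
    finally show ?thesis using w(2) by simp
  qed
  have \<rho>I: "\<rho> \<in> I" using I\<rho> cgenideal_self[OF \<rho>c] by simp
  have phi_hom: "(loc_map RX Pw \<circ> nc) \<in> ring_hom R Y.L" by (rule ring_hom_trans[OF nc_hom Y.hom_L])
  have PinPw: "P \<in> Pw"
  proof -
    have "P [^]\<^bsub>RX\<^esub> (1::nat) = P" using P_carr by simp
    then show ?thesis by (metis (mono_tags, lifting) mem_Collect_eq)
  qed
  have Punit: "loc_map RX Pw P \<in> Units Y.L" unfolding Y.loc_map_frac by (rule Y.frac_unit[OF PinPw Y.one_S])
  show ?thesis
  proof
    show "{ {a \<in> carrier R. loc_elem_map RX P (nc a) \<in> Q} | Q. Q \<in> Spec (loc_elem RX P) } \<subseteq> D_set R I"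
    proof
      fix q assume "q \<in> { {a \<in> carrier R. loc_elem_map RX P (nc a) \<in> Q} | Q. Q \<in> Spec (loc_elem RX P) }"
      then obtain Q where Q: "primeideal Q Y.L" "q = {a \<in> carrier R. loc_map RX Pw (nc a) \<in> Q}"
        unfolding Spec_def YL Ymap by blast
      have qprime: "primeideal q R"
      proof -
        have "primeideal {a \<in> carrier R. (loc_map RX Pw \<circ> nc) a \<in> Q} R"
          by (rule prime_vimage[OF is_cring Y.cring_L phi_hom Q(1)])
        then show ?thesis using Q(2) by simp
      qed
      have Qi: "ideal Q Y.L" by (rule primeideal.axioms(1)[OF Q(1)])
      have "\<not> I \<subseteq> q"
      proof
        assume "I \<subseteq> q"
        then have "loc_map RX Pw (nc \<rho>) \<in> Q" using \<rho>I Q(2) by blast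
        moreover have "loc_map RX Pw P = loc_map RX Pw w \<otimes>\<^bsub>Y.L\<^esub> loc_map RX Pw (nc \<rho>)"
        proof -
          have "loc_map RX Pw (w \<otimes>\<^bsub>RX\<^esub> nc \<rho>) = loc_map RX Pw w \<otimes>\<^bsub>Y.L\<^esub> loc_map RX Pw (nc \<rho>)"
            by (rule ring_hom_mult[OF Y.hom_L wc(1) nc\<rho>])
          then show ?thesis by (simp only: w(2)[symmetric])
        qed
        moreover have "loc_map RX Pw w \<in> carrier Y.L" using ring_hom_closed[OF Y.hom_L wc(1)] .
        ultimately have "loc_map RX Pw P \<in> Q" using ideal.I_l_closed[OF Qi] by simp
        then have "Q = carrier Y.L" using Y.cring_L cring.axioms(1) ring.ideal_unit_carrier[OF _ Qi Punit] by blast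
        then show False using primeideal.I_notcarr[OF Q(1)] by simp
      qed
      then show "q \<in> D_set R I" unfolding D_set_def Spec_def using qprime by blast
    qed
  next
    show "D_set R I \<subseteq> { {a \<in> carrier R. loc_elem_map RX P (nc a) \<in> Q} | Q. Q \<in> Spec (loc_elem RX P) }"
    proof
      fix q assume "q \<in> D_set R I"
      then have q: "primeideal q R" "\<not> I \<subseteq> q" unfolding D_set_def Spec_def by auto
      have qi: "ideal q R" by (rule primeideal.axioms(1)[OF q(1)])
      have \<rho>q: "\<rho> \<notin> q" using q(2) I\<rho> cgenideal_minimal[OF qi] by blast
      have qM: "q \<subseteq> M" using M_max_sub[OF qi] primeideal.I_notcarr[OF q(1)] by metis
      have disj: "polyI R q \<inter> Sigma_set R = {}"
      proof (rule ccontr)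
        assume "polyI R q \<inter> Sigma_set R \<noteq> {}"
        then obtain s where s: "s \<in> polyI R q" "s \<in> Sigma_set R" by blast
        then have "s \<notin> polyI R M" using Sigma_iff by simp
        moreover have "s \<in> polyI R M" using s(1) qM unfolding polyI_def by blast
        ultimately show False by simp
      qed
      define Q1 where "Q1 = loc_ext (UP R) (Sigma_set R) (polyI R q)"
      have Q1p: "primeideal Q1 RX" unfolding Q1_def by (rule X.prime_ext(1)[OF prime_polyI[OF q(1)] disj])
      have Q1i: "ideal Q1 RX" by (rule primeideal.axioms(1)[OF Q1p])
      have ncQ1: "\<And>a. a \<in> carrier R \<Longrightarrow> nc a \<in> Q1 \<longleftrightarrow> a \<in> q"
        unfolding Q1_def using K1[OF qi] K2[OF qi] by blast
      have PQ1: "P \<notin> Q1"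
      proof
        assume "P \<in> Q1"
        then have "nc \<rho> \<in> Q1" unfolding nc_P by (rule ideal.I_l_closed[OF Q1i _ wc(2)])
        then show False using ncQ1[OF \<rho>c] \<rho>q by simp
      qed
      have powQ1: "\<And>n::nat. P [^]\<^bsub>RX\<^esub> n \<notin> Q1"
      proof -
        fix n :: nat show "P [^]\<^bsub>RX\<^esub> n \<notin> Q1"
        proof (induction n)
          case 0
          have "\<one>\<^bsub>RX\<^esub> \<notin> Q1"
          proof
            assume "\<one>\<^bsub>RX\<^esub> \<in> Q1"
            then have "Q1 = carrier RX" by (rule ideal.one_imp_carrier[OF Q1i])
            then show False using primeideal.I_notcarr[OF Q1p] by simp
          qed
          then show ?case by simp
        next
          case (Suc n)
          have "P [^]\<^bsub>RX\<^esub> Suc n = P [^]\<^bsub>RX\<^esub> n \<otimes>\<^bsub>RX\<^esub> P" by simp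
          then show ?case using Suc primeideal.I_prime[OF Q1p] PQ1 P_carr Z.nat_pow_closed by metis
        qed
      qed
      have disj2: "Q1 \<inter> Pw = {}" using powQ1 by blast
      define Q2 where "Q2 = loc_ext RX Pw Q1"
      have Q2p: "primeideal Q2 Y.L" unfolding Q2_def by (rule Y.prime_ext(1)[OF Q1p disj2])
      have Q2c: "{x \<in> carrier RX. loc_map RX Pw x \<in> Q2} = Q1" unfolding Q2_def by (rule Y.prime_ext(2)[OF Q1p disj2])
      have "{a \<in> carrier R. loc_map RX Pw (nc a) \<in> Q2} = q"
      proof -
        have "\<And>a. a \<in> carrier R \<Longrightarrow> loc_map RX Pw (nc a) \<in> Q2 \<longleftrightarrow> nc a \<in> Q1"
          using Q2c nc_closed by blast
        then show ?thesis using ncQ1 ideal.Icarr[OF qi] by blast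
      qed
      moreover have "Q2 \<in> Spec (loc_elem RX P)" unfolding Spec_def YL using Q2p by simp
      ultimately show "q \<in> { {a \<in> carrier R. loc_elem_map RX P (nc a) \<in> Q} | Q. Q \<in> Spec (loc_elem RX P) }"
        unfolding Ymap by blast
    qed
  qed
qed

theorem main_nagp:
  "Idl\<^bsub>RX\<^esub> (nc ` I) = PIdl\<^bsub>RX\<^esub> P
   \<and> (\<exists>\<rho>. strong_divisor R \<rho> \<and> I = PIdl \<rho> \<and> equiv_elem RX P (nc \<rho>))
   \<and> (\<forall>i \<le> deg R p. P \<in> PIdl\<^bsub>RX\<^esub> (nc (p i)) \<longrightarrow> I = PIdl (p i))
   \<and> { {a \<in> carrier R. loc_elem_map RX P (nc a) \<in> Q} | Q. Q \<in> Spec (loc_elem RX P) } = D_set R I"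
proof -
  obtain k where k: "k \<le> deg R p" "P \<in> PIdl\<^bsub>RX\<^esub> (nc (p k))" using step1 by blast
  define \<rho> where "\<rho> = p k"
  have \<rho>c: "\<rho> \<in> carrier R" using pc \<rho>_def by simp
  obtain w where w: "w \<in> Units RX" "P = w \<otimes>\<^bsub>RX\<^esub> nc \<rho>" and I\<rho>: "I = PIdl \<rho>"
    using step2[OF k] \<rho>_def by blast
  have wc: "w \<in> carrier RX" "inv\<^bsub>RX\<^esub> w \<in> carrier RX" using w(1) by auto
  have nc\<rho>: "nc \<rho> \<in> carrier RX" by (rule nc_closed[OF \<rho>c])
  have nc_P: "nc \<rho> = inv\<^bsub>RX\<^esub> w \<otimes>\<^bsub>RX\<^esub> P"
  proof -
    have "inv\<^bsub>RX\<^esub> w \<otimes>\<^bsub>RX\<^esub> (w \<otimes>\<^bsub>RX\<^esub> nc \<rho>) = (inv\<^bsub>RX\<^esub> w \<otimes>\<^bsub>RX\<^esub> w) \<otimes>\<^bsub>RX\<^esub> nc \<rho>"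
      by (rule Z.m_assoc[symmetric, OF wc(2) wc(1) nc\<rho>])
    also have "\<dots> = nc \<rho>" using Z.Units_l_inv[OF w(1)] nc\<rho> by simp
    finally show ?thesis using w(2) by simp
  qed
  have \<rho>I: "\<rho> \<in> PIdl \<rho>" by (rule cgenideal_self[OF \<rho>c])
  have Ic: "I \<subseteq> carrier R" using ideal.Icarr[OF I_ideal] by blast
  have ncIc: "nc ` I \<subseteq> carrier RX" using Ic nc_closed by blast
  have A: "Idl\<^bsub>RX\<^esub> (nc ` I) = PIdl\<^bsub>RX\<^esub> P"
  proof
    show "Idl\<^bsub>RX\<^esub> (nc ` I) \<subseteq> PIdl\<^bsub>RX\<^esub> P"
    proof (rule Z.genideal_minimal[OF Z.cgenideal_ideal[OF P_carr]])
      show "nc ` I \<subseteq> PIdl\<^bsub>RX\<^esub> P"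
      proof
        fix z assume "z \<in> nc ` I"
        then obtain x where x: "z = nc x" "x \<in> I" by blast
        then obtain r where r: "r \<in> carrier R" "x = r \<otimes> \<rho>" using I\<rho> unfolding cgenideal_def by blast
        have rc: "nc r \<in> carrier RX" using nc_closed[OF r(1)] .
        have "z = nc r \<otimes>\<^bsub>RX\<^esub> (inv\<^bsub>RX\<^esub> w \<otimes>\<^bsub>RX\<^esub> P)" using x r nc_mult \<rho>c nc_P by simp
        also have "\<dots> = (nc r \<otimes>\<^bsub>RX\<^esub> inv\<^bsub>RX\<^esub> w) \<otimes>\<^bsub>RX\<^esub> P" by (rule Z.m_assoc[symmetric, OF rc wc(2) P_carr])
        finally show "z \<in> PIdl\<^bsub>RX\<^esub> P" unfolding cgenideal_def using rc wc by blast
      qed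
    qed
    show "PIdl\<^bsub>RX\<^esub> P \<subseteq> Idl\<^bsub>RX\<^esub> (nc ` I)"
    proof (rule Z.cgenideal_minimal[OF Z.genideal_ideal[OF ncIc]])
      have "nc \<rho> \<in> nc ` I" using \<rho>I I\<rho> by blast
      then have "nc \<rho> \<in> Idl\<^bsub>RX\<^esub> (nc ` I)" using Z.genideal_self[OF ncIc] by blast
      then show "P \<in> Idl\<^bsub>RX\<^esub> (nc ` I)" unfolding w(2) by (rule ideal.I_l_closed[OF Z.genideal_ideal[OF ncIc] _ wc(1)])
    qed
  qed
  have reg: "regular_elem R \<rho>"
    unfolding regular_elem_def
  proof (intro conjI ballI impI)
    show "\<rho> \<in> carrier R" by (rule \<rho>c)
    fix x assume x: "x \<in> carrier R" "\<rho> \<otimes> x = \<zero>"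
    have xc: "nc x \<in> carrier RX" by (rule nc_closed[OF x(1)])
    have "nc \<rho> \<otimes>\<^bsub>RX\<^esub> nc x = \<zero>\<^bsub>RX\<^esub>" using nc_mult[OF \<rho>c x(1)] x(2) nc_zero by simp
    then have "P \<otimes>\<^bsub>RX\<^esub> nc x = \<zero>\<^bsub>RX\<^esub>" using w(2) Z.m_assoc[OF wc(1) nc\<rho> xc] wc by simp
    then have "nc x = \<zero>\<^bsub>RX\<^esub>" using P_reg xc by blast
    moreover have "\<zero>\<^bsub>RX\<^esub> \<in> loc_ext (UP R) (Sigma_set R) (polyI R {\<zero>})"
      using Z.zero_closed additive_subgroup.zero_closed[OF ideal.axioms(1)[OF X.ideal_ext[OF ideal_polyI[OF zeroideal]]]]
      by simp
    ultimately have "x \<in> {\<zero>}" using K1[OF zeroideal x(1)] by simp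
    then show "x = \<zero>" by simp
  qed
  have cmp: "\<And>J. ideal J R \<Longrightarrow> PIdl \<rho> \<subseteq> J \<or> J \<subseteq> PIdl \<rho>"
  proof -
    fix J assume J: "ideal J R"
    let ?E = "loc_ext (UP R) (Sigma_set R) (polyI R J)"
    have E: "ideal ?E RX" by (rule X.ideal_ext[OF ideal_polyI[OF J]])
    show "PIdl \<rho> \<subseteq> J \<or> J \<subseteq> PIdl \<rho>"
    proof (cases "PIdl\<^bsub>RX\<^esub> P \<subseteq> ?E")
      case True
      then have "P \<in> ?E" using Z.cgenideal_self[OF P_carr] by blast
      then have "nc \<rho> \<in> ?E" unfolding nc_P by (rule ideal.I_l_closed[OF E _ wc(2)])
      then have "\<rho> \<in> J" by (rule K1[OF J \<rho>c])
      then show ?thesis using cgenideal_minimal[OF J] by blast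
    next
      case False
      then have sub: "?E \<subseteq> PIdl\<^bsub>RX\<^esub> P" using P_cmp[OF E] by blast
      have "J \<subseteq> PIdl \<rho>"
      proof
        fix x assume x: "x \<in> J"
        have xc: "x \<in> carrier R" using ideal.Icarr[OF J x] .
        have "nc x \<in> PIdl\<^bsub>RX\<^esub> P" using K2[OF J x] sub by blast
        then obtain y where y: "y \<in> carrier RX" "nc x = y \<otimes>\<^bsub>RX\<^esub> P" unfolding cgenideal_def by blast
        have "nc x = (y \<otimes>\<^bsub>RX\<^esub> w) \<otimes>\<^bsub>RX\<^esub> nc \<rho>" using y w(2) Z.m_assoc[OF y(1) wc(1) nc\<rho>] by simp
        moreover have "nc \<rho> \<in> loc_ext (UP R) (Sigma_set R) (polyI R (PIdl \<rho>))" by (rule K2[OF cgenideal_ideal[OF \<rho>c] \<rho>I])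
        ultimately have "nc x \<in> loc_ext (UP R) (Sigma_set R) (polyI R (PIdl \<rho>))"
          using ideal.I_l_closed[OF X.ideal_ext[OF ideal_polyI[OF cgenideal_ideal[OF \<rho>c]]]] y(1) wc(1) by simp
        then show "x \<in> PIdl \<rho>" by (rule K1[OF cgenideal_ideal[OF \<rho>c] xc])
      qed
      then show ?thesis by blast
    qed
  qed
  have sdR: "strong_divisor R \<rho>" unfolding strong_divisor_def using reg cmp by blast
  have eqv: "equiv_elem RX P (nc \<rho>)"
    unfolding equiv_elem_def D_elem_def D_set_def
  proof (rule Collect_cong)
    fix Q
    show "(Q \<in> Spec RX \<and> \<not> {P} \<subseteq> Q) = (Q \<in> Spec RX \<and> \<not> {nc \<rho>} \<subseteq> Q)"
    proof (cases "Q \<in> Spec RX")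
      case True
      then have Qi: "ideal Q RX" unfolding Spec_def using primeideal.axioms(1) by blast
      have "P \<in> Q \<longleftrightarrow> nc \<rho> \<in> Q"
      proof
        assume "P \<in> Q" then show "nc \<rho> \<in> Q" unfolding nc_P by (rule ideal.I_l_closed[OF Qi _ wc(2)])
      next
        assume "nc \<rho> \<in> Q" then show "P \<in> Q" unfolding w(2) by (rule ideal.I_l_closed[OF Qi _ wc(1)])
      qed
      then show ?thesis by simp
    qed simp
  qed
  have B: "\<exists>\<rho>. strong_divisor R \<rho> \<and> I = PIdl \<rho> \<and> equiv_elem RX P (nc \<rho>)"
    using sdR I\<rho> eqv by blast
  have C: "\<forall>i \<le> deg R p. P \<in> PIdl\<^bsub>RX\<^esub> (nc (p i)) \<longrightarrow> I = PIdl (p i)"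
    using step2 by blast
  have D: "{ {a \<in> carrier R. loc_elem_map RX P (nc a) \<in> Q} | Q. Q \<in> Spec (loc_elem RX P) } = D_set R I"
    by (rule spec_part[OF w I\<rho> \<rho>c])
  show ?thesis using A B C D by blast
qed

end



theorem mainTheorem15:
  fixes R :: "'a ring" and p :: "nat \<Rightarrow> 'a"
  defines "RX \<equiv> nagata R"
      and "P \<equiv> nagata_map R p"
      and "I \<equiv> content_ideal R p"
  assumes "local_ring R"
      and "p \<in> carrier (UP R)"
      and "strong_divisor RX P"
      and "P \<notin> Units RX"
  shows "Idl\<^bsub>RX\<^esub> (nagata_const R ` I) = PIdl\<^bsub>RX\<^esub> P
       \<and> (\<exists>\<rho>. strong_divisor R \<rho> \<and> I = PIdl\<^bsub>R\<^esub> \<rho> \<and> equiv_elem RX P (nagata_const R \<rho>))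
       \<and> (\<forall>i \<le> deg R p. P \<in> PIdl\<^bsub>RX\<^esub> (nagata_const R (p i)) \<longrightarrow> I = PIdl\<^bsub>R\<^esub> (p i))
       \<and> { {a \<in> carrier R. loc_elem_map RX P (nagata_const R a) \<in> Q} | Q. Q \<in> Spec (loc_elem RX P) }
           = D_set R I"
proof -
  obtain M where lr: "lring R M" using local_ring_lring[OF assms(4)] by blast
  have sd: "strong_divisor (nagata R) (nagata_map R p)" using assms(6) unfolding assms(1,2) .
  have np: "nagp R M p"
    unfolding nagp_def nagp_axioms_def nag_def using lr assms(5) sd by simp
  have main: "Idl\<^bsub>localization (UP R) (Sigma_set R)\<^esub> (nagata_const R ` content_ideal R p) = PIdl\<^bsub>localization (UP R) (Sigma_set R)\<^esub> (loc_frac (UP R) (Sigma_set R) p \<one>\<^bsub>UP R\<^esub>)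
   \<and> (\<exists>\<rho>. strong_divisor R \<rho> \<and> content_ideal R p = PIdl\<^bsub>R\<^esub> \<rho> \<and> equiv_elem (localization (UP R) (Sigma_set R)) (loc_frac (UP R) (Sigma_set R) p \<one>\<^bsub>UP R\<^esub>) (nagata_const R \<rho>))
   \<and> (\<forall>i \<le> deg R p. loc_frac (UP R) (Sigma_set R) p \<one>\<^bsub>UP R\<^esub> \<in> PIdl\<^bsub>localization (UP R) (Sigma_set R)\<^esub> (nagata_const R (p i)) \<longrightarrow> content_ideal R p = PIdl\<^bsub>R\<^esub> (p i))
   \<and> { {a \<in> carrier R. loc_elem_map (localization (UP R) (Sigma_set R)) (loc_frac (UP R) (Sigma_set R) p \<one>\<^bsub>UP R\<^esub>) (nagata_const R a) \<in> Q} | Q. Q \<in> Spec (loc_elem (localization (UP R) (Sigma_set R)) (loc_frac (UP R) (Sigma_set R) p \<one>\<^bsub>UP R\<^esub>)) } = D_set R (content_ideal R p)"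
    by (rule nagp.main_nagp[OF np])
  have e1: "RX = localization (UP R) (Sigma_set R)" unfolding assms(1) nagata_def by simp
  have e2: "P = loc_frac (UP R) (Sigma_set R) p \<one>\<^bsub>UP R\<^esub>" unfolding assms(2) nagata_map_def loc_map_def by simp
  show ?thesis unfolding e1 e2 assms(3) using main by simp
qed

end
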